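(* Let $\tilde K=\sum_{i=1}^\infty a_iK_i$ where each $K_i$ is a Markov kernel reversible with respect to a probability distribution $\pi$, $a_i\ge0$, $\sum_i a_i=1$. Suppose $a_1>0$ and $K_1$ has $\pi$ as its unique invariant distribution. Then if $K_1$ is variance bounding, so is $\tilde K$; and if $K_1$ is geometrically ergodic, so is $\tilde K$.
   Context: For a kernel $P$ reversible w.r.t. $\pi$, $\sigma_0(P)$ denotes its spectrum as a self-adjoint operator on $L^2_0(\pi)$ (mean-zero square-integrable functions). $P$ is variance bounding if $\sup\sigma_0(P)<1$ and geometrically ergodic if $\sup|\sigma_0(P)|<1$. *)

theory Defs
  imports "HOL-Probability.Probability"
begin

definition markov_kernel :: "'a measure \<Rightarrow> ('a \<Rightarrow> 'a measure) \<Rightarrow> bool" where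
  "markov_kernel \<pi> K \<longleftrightarrow> K \<in> \<pi> \<rightarrow>\<^sub>M prob_algebra \<pi>"

definition reversible :: "'a measure \<Rightarrow> ('a \<Rightarrow> 'a measure) \<Rightarrow> bool" where
  "reversible \<pi> K \<longleftrightarrow> (\<forall>A\<in>sets \<pi>. \<forall>B\<in>sets \<pi>.
     (\<integral>\<^sup>+ x. indicator A x * emeasure (K x) B \<partial>\<pi>) =
     (\<integral>\<^sup>+ x. indicator B x * emeasure (K x) A \<partial>\<pi>))"

definition invariant_dist :: "'a measure \<Rightarrow> ('a \<Rightarrow> 'a measure) \<Rightarrow> 'a measure \<Rightarrow> bool" where
  "invariant_dist \<pi> K mu \<longleftrightarrow> prob_space mu \<and> sets mu = sets \<pi> \<and>
     (\<forall>B\<in>sets \<pi>. (\<integral>\<^sup>+ x. emeasure (K x) B \<partial>mu) = emeasure mu B)"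

definition unique_invariant :: "'a measure \<Rightarrow> ('a \<Rightarrow> 'a measure) \<Rightarrow> bool" where
  "unique_invariant \<pi> K \<longleftrightarrow> invariant_dist \<pi> K \<pi> \<and>
     (\<forall>mu. invariant_dist \<pi> K mu \<longrightarrow> mu = \<pi>)"

text \<open>The countable mixture sum_i a_i K_i (index 0 plays the role of K_1).\<close>
definition mixture :: "'a measure \<Rightarrow> (nat \<Rightarrow> real) \<Rightarrow> (nat \<Rightarrow> 'a \<Rightarrow> 'a measure) \<Rightarrow> 'a \<Rightarrow> 'a measure" where
  "mixture \<pi> a K x = measure_of (space \<pi>) (sets \<pi>)
      (\<lambda>B. \<Sum>i. ennreal (a i) * emeasure (K i x) B)"

text \<open>L^2_0(\<pi>): square-integrable, mean-zero real functions (elements of L^2 are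
  represented by functions; equality in L^2 is equality \<pi>-almost everywhere).\<close>
definition L2_0 :: "'a measure \<Rightarrow> ('a \<Rightarrow> real) set" where
  "L2_0 \<pi> = {f \<in> borel_measurable \<pi>. integrable \<pi> (\<lambda>x. (f x)\<^sup>2) \<and> (\<integral>x. f x \<partial>\<pi>) = 0}"

definition kop :: "('a \<Rightarrow> 'a measure) \<Rightarrow> ('a \<Rightarrow> real) \<Rightarrow> 'a \<Rightarrow> real" where
  "kop K f x = (\<integral>y. f y \<partial>(K x))"

text \<open>Spectrum of P on L^2_0(\<pi>): the (real, since P is self-adjoint) numbers lambda for
  which P - lambda I is not a bijection of L^2_0(\<pi>) (bounded inverse is then automatic
  by the open mapping theorem).\<close>
definition spectrum0 :: "'a measure \<Rightarrow> ('a \<Rightarrow> 'a measure) \<Rightarrow> real set" where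
  "spectrum0 \<pi> K = {l. \<not> (
     (\<forall>f\<in>L2_0 \<pi>. (AE x in \<pi>. kop K f x - l * f x = 0) \<longrightarrow> (AE x in \<pi>. f x = 0)) \<and>
     (\<forall>g\<in>L2_0 \<pi>. \<exists>f\<in>L2_0 \<pi>. AE x in \<pi>. kop K f x - l * f x = g x))}"

text \<open>sup sigma_0(P) < 1 (with sup of the empty set read as -infinity).\<close>
definition variance_bounding :: "'a measure \<Rightarrow> ('a \<Rightarrow> 'a measure) \<Rightarrow> bool" where
  "variance_bounding \<pi> K \<longleftrightarrow> (\<exists>r<1. \<forall>l\<in>spectrum0 \<pi> K. l \<le> r)"

definition geometrically_ergodic :: "'a measure \<Rightarrow> ('a \<Rightarrow> 'a measure) \<Rightarrow> bool" where
  "geometrically_ergodic \<pi> K \<longleftrightarrow> (\<exists>r<1. \<forall>l\<in>spectrum0 \<pi> K. \<bar>l\<bar> \<le> r)"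

end

theory Submission
  imports Defs
begin

definition L2 :: "'a measure \<Rightarrow> ('a \<Rightarrow> real) set" where
  "L2 M = {f \<in> borel_measurable M. integrable M (\<lambda>x. (f x)\<^sup>2)}"
definition ip :: "'a measure \<Rightarrow> ('a \<Rightarrow> real) \<Rightarrow> ('a \<Rightarrow> real) \<Rightarrow> real" where
  "ip M f g = (\<integral>x. f x * g x \<partial>M)"
definition nrm :: "'a measure \<Rightarrow> ('a \<Rightarrow> real) \<Rightarrow> real" where
  "nrm M f = sqrt (ip M f f)"

lemma abs_prod_le: "\<bar>u * v\<bar> \<le> u\<^sup>2 + (v::real)\<^sup>2"
proof -
  have "0 \<le> (\<bar>u\<bar> - \<bar>v\<bar>)\<^sup>2" by simp
  hence "2*(\<bar>u\<bar>*\<bar>v\<bar>) \<le> \<bar>u\<bar>\<^sup>2 + \<bar>v\<bar>\<^sup>2" by (simp add: power2_diff mult.assoc)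
  moreover have "0 \<le> \<bar>u\<bar>*\<bar>v\<bar>" by simp
  ultimately have "\<bar>u\<bar>*\<bar>v\<bar> \<le> u\<^sup>2 + v\<^sup>2" by (simp only: power2_abs)
  thus ?thesis by (simp add: abs_mult)
qed

lemma L2_0_sub: "L2_0 M \<subseteq> L2 M"
  unfolding L2_0_def L2_def by auto

lemma L2_mult_int:
  assumes "f \<in> L2 M" "g \<in> L2 M"
  shows "integrable M (\<lambda>x. f x * g x)"
proof (rule Bochner_Integration.integrable_bound)
  show "integrable M (\<lambda>x. (f x)\<^sup>2 + (g x)\<^sup>2)" using assms unfolding L2_def by auto
  show "(\<lambda>x. f x * g x) \<in> borel_measurable M" using assms unfolding L2_def by auto
  show "AE x in M. norm (f x * g x) \<le> norm ((f x)\<^sup>2 + (g x)\<^sup>2)"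
  proof (intro AE_I2)
    fix x
    have "\<bar>f x * g x\<bar> \<le> (f x)\<^sup>2 + (g x)\<^sup>2" by (rule abs_prod_le)
    then show "norm (f x * g x) \<le> norm ((f x)\<^sup>2 + (g x)\<^sup>2)" by simp
  qed
qed

lemma (in prob_space) L2_int:
  assumes "f \<in> L2 M" shows "integrable M f"
proof (rule Bochner_Integration.integrable_bound)
  show "integrable M (\<lambda>x. 1 + (f x)\<^sup>2)" using assms unfolding L2_def by auto
  show "f \<in> borel_measurable M" using assms unfolding L2_def by auto
  show "AE x in M. norm (f x) \<le> norm (1 + (f x)\<^sup>2)"
  proof (intro AE_I2)
    fix x
    have "\<bar>f x * 1\<bar> \<le> (f x)\<^sup>2 + 1\<^sup>2" by (rule abs_prod_le)
    then have "\<bar>f x\<bar> \<le> 1 + (f x)\<^sup>2" by simp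
    then show "norm (f x) \<le> norm (1 + (f x)\<^sup>2)" by simp
  qed
qed

lemma L2_lin:
  assumes "f \<in> L2 M" "g \<in> L2 M"
  shows "(\<lambda>x. a * f x + b * g x) \<in> L2 M"
proof -
  have "integrable M (\<lambda>x. a\<^sup>2 * (f x)\<^sup>2 + b\<^sup>2 * (g x)\<^sup>2 + 2*a*b * (f x * g x))"
    using assms L2_mult_int[OF assms] unfolding L2_def by auto
  then have "integrable M (\<lambda>x. (a * f x + b * g x)\<^sup>2)"
    by (rule back_subst[where P="integrable M"]) (auto simp: power2_eq_square algebra_simps)
  then show ?thesis using assms unfolding L2_def by auto
qed

lemma (in prob_space) L2_0_lin:
  assumes "f \<in> L2_0 M" "g \<in> L2_0 M"
  shows "(\<lambda>x. a * f x + b * g x) \<in> L2_0 M"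
proof -
  have L: "f \<in> L2 M" "g \<in> L2 M" using assms L2_0_sub by auto
  have "(\<lambda>x. a * f x + b * g x) \<in> L2 M" using L2_lin[OF L] .
  moreover have "(\<integral>x. a * f x + b * g x \<partial>M) = 0"
    using assms L2_int[OF L(1)] L2_int[OF L(2)] unfolding L2_0_def by simp
  ultimately show ?thesis unfolding L2_0_def L2_def by auto
qed

lemma (in prob_space) L2_0_zero: "(\<lambda>x. 0) \<in> L2_0 M"
  unfolding L2_0_def by auto

lemma ip_sym: "ip M f g = ip M g f"
  unfolding ip_def by (simp add: mult.commute)

lemma ip_lin_left:
  assumes "f \<in> L2 M" "g \<in> L2 M" "h \<in> L2 M"
  shows "ip M (\<lambda>x. a * f x + b * g x) h = a * ip M f h + b * ip M g h"
proof -
  have "ip M (\<lambda>x. a * f x + b * g x) h = (\<integral>x. a * (f x * h x) + b * (g x * h x) \<partial>M)"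
    unfolding ip_def by (simp add: algebra_simps)
  also have "\<dots> = a * ip M f h + b * ip M g h"
    using L2_mult_int[OF assms(1,3)] L2_mult_int[OF assms(2,3)] unfolding ip_def by simp
  finally show ?thesis .
qed

lemma ip_lin_right:
  assumes "f \<in> L2 M" "g \<in> L2 M" "h \<in> L2 M"
  shows "ip M h (\<lambda>x. a * f x + b * g x) = a * ip M h f + b * ip M h g"
  using ip_lin_left[OF assms] by (simp add: ip_sym)

lemma ip_self_nonneg: "0 \<le> ip M f f"
  unfolding ip_def by (intro integral_nonneg_AE) simp

lemma ip_cong_meas:
  assumes "f \<in> borel_measurable M" "f' \<in> borel_measurable M" "g \<in> borel_measurable M" "g' \<in> borel_measurable M"
   "AE x in M. f x = f' x" "AE x in M. g x = g' x"
  shows "ip M f g = ip M f' g'"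
  unfolding ip_def using assms by (intro integral_cong_AE) (auto)

lemma ip_self_eq0:
  assumes "f \<in> L2 M"
  shows "ip M f f = 0 \<longleftrightarrow> (AE x in M. f x = 0)"
proof -
  have "ip M f f = (\<integral>x. (f x)\<^sup>2 \<partial>M)" unfolding ip_def by (simp add: power2_eq_square)
  also have "\<dots> = 0 \<longleftrightarrow> (AE x in M. (f x)\<^sup>2 = 0)"
    using assms unfolding L2_def by (intro integral_nonneg_eq_0_iff_AE) auto
  finally show ?thesis by simp
qed

lemma nrm_nonneg: "0 \<le> nrm M f"
  unfolding nrm_def using ip_self_nonneg[of M f] by simp

lemma nrm_sq: "(nrm M f)\<^sup>2 = ip M f f"
  unfolding nrm_def by (rule real_sqrt_pow2[OF ip_self_nonneg])

lemma nrm_eq0: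
  assumes "f \<in> L2 M"
  shows "nrm M f = 0 \<longleftrightarrow> (AE x in M. f x = 0)"
  using ip_self_eq0[OF assms] unfolding nrm_def by simp

lemma ip_expand:
  assumes "f \<in> L2 M" "g \<in> L2 M"
  shows "ip M (\<lambda>x. a * f x + b * g x) (\<lambda>x. a * f x + b * g x)
     = a\<^sup>2 * ip M f f + 2 * a * b * ip M f g + b\<^sup>2 * ip M g g"
proof -
  have L: "(\<lambda>x. a * f x + b * g x) \<in> L2 M" using L2_lin[OF assms] .
  have "ip M (\<lambda>x. a * f x + b * g x) (\<lambda>x. a * f x + b * g x)
     = a * ip M f (\<lambda>x. a * f x + b * g x) + b * ip M g (\<lambda>x. a * f x + b * g x)"
    using ip_lin_left[OF assms L] .
  also have "\<dots> = a * (a * ip M f f + b * ip M f g) + b * (a * ip M g f + b * ip M g g)"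
    using ip_lin_right[OF assms assms(1)] ip_lin_right[OF assms assms(2)] by simp
  finally show ?thesis by (simp add: ip_sym[of M g f] power2_eq_square algebra_simps)
qed

lemma CS:
  assumes "f \<in> L2 M" "g \<in> L2 M"
  shows "\<bar>ip M f g\<bar> \<le> nrm M f * nrm M g"
proof (cases "ip M g g = 0")
  case True
  then have "AE x in M. g x = 0" using ip_self_eq0[OF assms(2)] by simp
  then have "ip M f g = ip M f (\<lambda>x. 0)" using assms unfolding L2_def by (intro ip_cong_meas) auto
  then show ?thesis by (simp add: ip_def nrm_def)
next
  case False
  then have gg: "ip M g g > 0" using ip_self_nonneg[of M g] by linarith
  define t where "t = ip M f g / ip M g g"
  have "0 \<le> ip M (\<lambda>x. 1 * f x + (-t) * g x) (\<lambda>x. 1 * f x + (-t) * g x)"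
    by (rule ip_self_nonneg)
  also have "\<dots> = ip M f f - 2 * t * ip M f g + t\<^sup>2 * ip M g g"
    using ip_expand[OF assms, of 1 "-t"] by simp
  also have "\<dots> = ip M f f - (ip M f g)\<^sup>2 / ip M g g"
    using gg unfolding t_def by (simp add: power2_eq_square field_simps)
  finally have "(ip M f g)\<^sup>2 \<le> ip M f f * ip M g g"
    using gg by (simp add: field_simps)
  then have "sqrt ((ip M f g)\<^sup>2) \<le> sqrt (ip M f f * ip M g g)"
    by (rule real_sqrt_le_mono)
  then show ?thesis unfolding nrm_def by (simp add: real_sqrt_mult)
qed

lemma nrm_lin_le:
  assumes "f \<in> L2 M" "g \<in> L2 M"
  shows "nrm M (\<lambda>x. a * f x + b * g x) \<le> \<bar>a\<bar> * nrm M f + \<bar>b\<bar> * nrm M g"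
proof -
  have "ip M (\<lambda>x. a * f x + b * g x) (\<lambda>x. a * f x + b * g x)
     = a\<^sup>2 * ip M f f + 2 * a * b * ip M f g + b\<^sup>2 * ip M g g" by (rule ip_expand[OF assms])
  also have "\<dots> \<le> a\<^sup>2 * (nrm M f)\<^sup>2 + 2 * \<bar>a\<bar> * \<bar>b\<bar> * (nrm M f * nrm M g) + b\<^sup>2 * (nrm M g)\<^sup>2"
  proof -
    have "2 * a * b * ip M f g \<le> \<bar>2 * a * b * ip M f g\<bar>" by simp
    also have "\<dots> = 2 * \<bar>a\<bar> * \<bar>b\<bar> * \<bar>ip M f g\<bar>" by (simp add: abs_mult)
    also have "\<dots> \<le> 2 * \<bar>a\<bar> * \<bar>b\<bar> * (nrm M f * nrm M g)"
      by (intro mult_left_mono CS[OF assms]) auto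
    finally show ?thesis by (simp add: nrm_sq)
  qed
  also have "\<dots> = (\<bar>a\<bar> * nrm M f + \<bar>b\<bar> * nrm M g)\<^sup>2"
    by (simp add: power2_eq_square algebra_simps)
  finally have "(nrm M (\<lambda>x. a * f x + b * g x))\<^sup>2 \<le> (\<bar>a\<bar> * nrm M f + \<bar>b\<bar> * nrm M g)\<^sup>2"
    by (simp add: nrm_sq)
  then show ?thesis
    by (rule power2_le_imp_le) (simp add: nrm_nonneg)
qed

lemma nrm_scale:
  assumes "f \<in> L2 M"
  shows "nrm M (\<lambda>x. c * f x) = \<bar>c\<bar> * nrm M f"
proof -
  have "ip M (\<lambda>x. c * f x + 0 * f x) (\<lambda>x. c * f x + 0 * f x) = c\<^sup>2 * ip M f f"
    using ip_expand[OF assms assms, of c 0] by simp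
  then show ?thesis unfolding nrm_def by (simp add: real_sqrt_mult)
qed

lemma nrm_cong:
  assumes "f \<in> borel_measurable M" "g \<in> borel_measurable M" "AE x in M. f x = g x"
  shows "nrm M f = nrm M g"
  unfolding nrm_def using ip_cong_meas[OF assms(1,2,1,2) assms(3) assms(3)] by simp

lemma L2_nn: assumes "f \<in> L2 M"
  shows "(\<integral>\<^sup>+x. ennreal ((f x)\<^sup>2) \<partial>M) = ennreal ((nrm M f)\<^sup>2)"
proof -
  have "(\<integral>\<^sup>+x. ennreal ((f x)\<^sup>2) \<partial>M) = ennreal (\<integral>x. (f x)\<^sup>2 \<partial>M)"
    using assms unfolding L2_def by (intro nn_integral_eq_integral) auto
  also have "(\<integral>x. (f x)\<^sup>2 \<partial>M) = (nrm M f)\<^sup>2"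
    using nrm_sq[of M f] by (simp add: ip_def power2_eq_square)
  finally show ?thesis .
qed

lemma L2_of_nn:
  assumes "f \<in> borel_measurable M" "(\<integral>\<^sup>+x. ennreal ((f x)\<^sup>2) \<partial>M) \<le> ennreal B" "0 \<le> B"
  shows "f \<in> L2 M" "(nrm M f)\<^sup>2 \<le> B"
proof -
  obtain c where c: "(\<integral>\<^sup>+x. ennreal ((f x)\<^sup>2) \<partial>M) = ennreal c" "0 \<le> c"
    using assms(2) by (metis ennreal_cases ennreal_less_top le_less_trans less_top_ennreal top.not_eq_extremum)
  have "integrable M (\<lambda>x. (f x)\<^sup>2)"
    using assms(1) by (intro integrableI_nn_integral_finite[OF _ _ c(1)]) auto
  then show L: "f \<in> L2 M" using assms unfolding L2_def by auto
  show "(nrm M f)\<^sup>2 \<le> B"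
    using assms(2,3) L2_nn[OF L] by simp
qed

lemma L2_abs: assumes "f \<in> L2 M" shows "(\<lambda>x. \<bar>f x\<bar>) \<in> L2 M" "nrm M (\<lambda>x. \<bar>f x\<bar>) = nrm M f"
  using assms unfolding L2_def nrm_def ip_def by auto

lemma partial_abs_L2:
  fixes N :: nat
  assumes "\<And>n. u n \<in> L2 M"
  shows "(\<lambda>x. \<Sum>n<N. \<bar>u n x\<bar>) \<in> L2 M \<and> nrm M (\<lambda>x. \<Sum>n<N. \<bar>u n x\<bar>) \<le> (\<Sum>n<N. nrm M (u n))"
proof (induction N)
  case 0
  then show ?case unfolding L2_def nrm_def ip_def by simp
next
  case (Suc N)
  have e: "(\<lambda>x. \<Sum>n<Suc N. \<bar>u n x\<bar>) = (\<lambda>x. 1 * (\<Sum>n<N. \<bar>u n x\<bar>) + 1 * \<bar>u N x\<bar>)" by simp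
  have "nrm M (\<lambda>x. 1 * (\<Sum>n<N. \<bar>u n x\<bar>) + 1 * \<bar>u N x\<bar>) \<le> \<bar>1\<bar> * nrm M (\<lambda>x. \<Sum>n<N. \<bar>u n x\<bar>) + \<bar>1\<bar> * nrm M (\<lambda>x. \<bar>u N x\<bar>)"
    using Suc L2_abs[OF assms[of N]] by (intro nrm_lin_le) auto
  then show ?case using Suc L2_abs[OF assms[of N]] L2_lin[of "\<lambda>x. \<Sum>n<N. \<bar>u n x\<bar>" M "\<lambda>x. \<bar>u N x\<bar>" 1 1]
    unfolding e by auto
qed

lemma SUP_ennreal_incseq:
  fixes f :: "nat \<Rightarrow> real"
  assumes "incseq f" "f \<longlonglongrightarrow> L"
  shows "(SUP N. ennreal (f N)) = ennreal L"
proof -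
  have "incseq (\<lambda>N. ennreal (f N))" using assms(1) by (simp add: incseq_def ennreal_leI)
  then have "(\<lambda>N. ennreal (f N)) \<longlonglongrightarrow> (SUP N. ennreal (f N))" by (rule LIMSEQ_SUP)
  moreover have "(\<lambda>N. ennreal (f N)) \<longlonglongrightarrow> ennreal L" using assms(2) by (rule tendsto_ennrealI)
  ultimately show ?thesis by (rule LIMSEQ_unique)
qed

lemma L2_series_bound:
  assumes u: "\<And>n. u n \<in> L2 M" and sm: "summable (\<lambda>n. nrm M (u n))"
  shows "AE x in M. summable (\<lambda>n. \<bar>u n x\<bar>)"
    and "(\<integral>\<^sup>+x. ennreal ((\<Sum>n. \<bar>u n x\<bar>)\<^sup>2) \<partial>M) \<le> ennreal ((\<Sum>n. nrm M (u n))\<^sup>2)"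
proof -
  define S where "S = (\<Sum>n. nrm M (u n))"
  define P where "P N x = (\<Sum>n<N. \<bar>u n x\<bar>)" for N x
  have PL: "P N \<in> L2 M" for N using partial_abs_L2[OF u, where N=N] unfolding P_def by (simp add: fun_eq_iff)
  have Pn: "nrm M (P N) \<le> S" for N
  proof -
    have "nrm M (P N) \<le> (\<Sum>n<N. nrm M (u n))" using partial_abs_L2[OF u, where N=N] unfolding P_def by simp
    also have "\<dots> \<le> S" unfolding S_def using sm by (intro sum_le_suminf) (auto simp: nrm_nonneg)
    finally show ?thesis .
  qed
  have S0: "0 \<le> S" unfolding S_def using sm by (intro suminf_nonneg) (auto simp: nrm_nonneg)
  have P0: "0 \<le> P N x" for N x unfolding P_def by (simp add: sum_nonneg)
  have Pinc: "P N x \<le> P (Suc N) x" for N x unfolding P_def by simp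
  have Pmono: "P N x \<le> P N' x" if "N \<le> N'" for N N' x
    using that by (induction rule: dec_induct) (auto intro: order_trans Pinc)
  have meas: "P N \<in> borel_measurable M" for N using PL[of N] unfolding L2_def by auto
  define F where "F N x = ennreal ((P N x)\<^sup>2)" for N x
  have Finc: "incseq F" unfolding F_def incseq_def le_fun_def
    using Pmono P0 by (auto intro!: ennreal_leI power_mono)
  have FI: "(\<integral>\<^sup>+x. (SUP N. F N x) \<partial>M) = (SUP N. \<integral>\<^sup>+x. F N x \<partial>M)"
    using Finc meas unfolding F_def by (intro nn_integral_monotone_convergence_SUP) auto
  also have "\<dots> \<le> ennreal (S\<^sup>2)"
  proof (rule SUP_least)
    fix N
    have "(\<integral>\<^sup>+x. F N x \<partial>M) = ennreal ((nrm M (P N))\<^sup>2)" unfolding F_def by (rule L2_nn[OF PL])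
    also have "\<dots> \<le> ennreal (S\<^sup>2)" using Pn[of N] by (intro ennreal_leI power_mono) (auto simp: nrm_nonneg)
    finally show "(\<integral>\<^sup>+x. F N x \<partial>M) \<le> ennreal (S\<^sup>2)" .
  qed
  finally have FB: "(\<integral>\<^sup>+x. (SUP N. F N x) \<partial>M) \<le> ennreal (S\<^sup>2)" .
  have "AE x in M. (SUP N. F N x) \<noteq> \<infinity>"
    using FB meas unfolding F_def
    by (intro nn_integral_PInf_AE) (auto simp: top_unique)
  then have good: "AE x in M. summable (\<lambda>n. \<bar>u n x\<bar>) \<and> (SUP N. F N x) = ennreal ((\<Sum>n. \<bar>u n x\<bar>)\<^sup>2)"
  proof (rule AE_mp, intro AE_I2 impI)
    fix x assume fin: "(SUP N. F N x) \<noteq> \<infinity>"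
    then obtain c where c: "(SUP N. F N x) = ennreal c" "0 \<le> c"
      by (metis ennreal_cases infinity_ennreal_def)
    have "(P N x)\<^sup>2 \<le> c" for N
    proof -
      have "ennreal ((P N x)\<^sup>2) \<le> ennreal c" using c(1) SUP_upper[of N UNIV "\<lambda>N. F N x"] unfolding F_def by simp
      then show ?thesis using c(2) by (simp add: ennreal_le_iff)
    qed
    then have "P N x \<le> sqrt c" for N using P0 by (metis real_le_rsqrt)
    then have sx: "summable (\<lambda>n. \<bar>u n x\<bar>)" unfolding P_def by (intro summableI_nonneg_bounded) auto
    have "(\<lambda>N. (P N x)\<^sup>2) \<longlonglongrightarrow> (\<Sum>n. \<bar>u n x\<bar>)\<^sup>2"
      unfolding P_def by (intro tendsto_power summable_LIMSEQ sx)
    moreover have "incseq (\<lambda>N. (P N x)\<^sup>2)" using Pmono P0 by (auto simp: incseq_def intro!: power_mono)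
    ultimately have "(SUP N. F N x) = ennreal ((\<Sum>n. \<bar>u n x\<bar>)\<^sup>2)"
      unfolding F_def by (intro SUP_ennreal_incseq) 
    then show "summable (\<lambda>n. \<bar>u n x\<bar>) \<and> (SUP N. F N x) = ennreal ((\<Sum>n. \<bar>u n x\<bar>)\<^sup>2)" using sx by simp
  qed
  then show "AE x in M. summable (\<lambda>n. \<bar>u n x\<bar>)" by auto
  have "(\<integral>\<^sup>+x. ennreal ((\<Sum>n. \<bar>u n x\<bar>)\<^sup>2) \<partial>M) = (\<integral>\<^sup>+x. (SUP N. F N x) \<partial>M)"
    using good by (intro nn_integral_cong_AE) auto
  with FB show "(\<integral>\<^sup>+x. ennreal ((\<Sum>n. \<bar>u n x\<bar>)\<^sup>2) \<partial>M) \<le> ennreal ((\<Sum>n. nrm M (u n))\<^sup>2)"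
    unfolding S_def by simp
qed

lemma (in prob_space) abs_integral_le_nrm:
  assumes "f \<in> L2 M"
  shows "\<bar>\<integral>x. f x \<partial>M\<bar> \<le> nrm M f"
proof -
  have one: "(\<lambda>x. 1) \<in> L2 M" unfolding L2_def by auto
  have "nrm M (\<lambda>x. 1) = 1" unfolding nrm_def ip_def by (simp add: prob_space)
  moreover have "ip M f (\<lambda>x. 1) = (\<integral>x. f x \<partial>M)" unfolding ip_def by simp
  ultimately show ?thesis using CS[OF assms one] by simp
qed

lemma (in prob_space) L2_0_series:
  assumes h: "\<And>n. h n \<in> L2_0 M" and sm: "summable (\<lambda>n. nrm M (h n))"
  shows "\<exists>s \<in> L2_0 M. \<forall>N. nrm M (\<lambda>x. s x - (\<Sum>n<N. h n x)) \<le> (\<Sum>n. nrm M (h (n+N)))"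
proof -
  have hL: "h n \<in> L2 M" for n using h L2_0_sub by auto
  have hm[measurable]: "h n \<in> borel_measurable M" for n using hL unfolding L2_def by auto
  define s where "s x = (\<Sum>n. h n x)" for x
  have sm_meas[measurable]: "s \<in> borel_measurable M" unfolding s_def by measurable
  define D where "D N x = s x - (\<Sum>n<N. h n x)" for N x
  have Dm: "D N \<in> borel_measurable M" for N unfolding D_def by measurable
  have tail0: "0 \<le> (\<Sum>n. nrm M (h (n+N)))" for N
    using summable_ignore_initial_segment[OF sm, of N] by (intro suminf_nonneg) (auto simp: nrm_nonneg)
  have DL: "D N \<in> L2 M \<and> nrm M (D N) \<le> (\<Sum>n. nrm M (h (n+N)))" for N
  proof -
    have smN: "summable (\<lambda>n. nrm M (h (n+N)))" using summable_ignore_initial_segment[OF sm] .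
    note B = L2_series_bound[of "\<lambda>n. h (n+N)", OF hL smN]
    have "AE x in M. summable (\<lambda>n. \<bar>h n x\<bar>)" using L2_series_bound(1)[OF hL sm] .
    then have ae: "AE x in M. ennreal ((D N x)\<^sup>2) \<le> ennreal ((\<Sum>n. \<bar>h (n+N) x\<bar>)\<^sup>2)"
    proof (rule AE_mp, intro AE_I2 impI)
      fix x assume sx: "summable (\<lambda>n. \<bar>h n x\<bar>)"
      then have sx': "summable (\<lambda>n. h n x)" by (rule summable_rabs_cancel)
      have "D N x = (\<Sum>n. h (n+N) x)" unfolding D_def s_def
        using suminf_minus_initial_segment[OF sx', of N] by simp
      then have "\<bar>D N x\<bar> \<le> (\<Sum>n. \<bar>h (n+N) x\<bar>)"
        using summable_rabs summable_ignore_initial_segment[OF sx, of N] by simp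
      then have "(D N x)\<^sup>2 \<le> (\<Sum>n. \<bar>h (n+N) x\<bar>)\<^sup>2"
        by (metis abs_ge_zero power2_abs power_mono)
      then show "ennreal ((D N x)\<^sup>2) \<le> ennreal ((\<Sum>n. \<bar>h (n+N) x\<bar>)\<^sup>2)" by (rule ennreal_leI)
    qed
    have "(\<integral>\<^sup>+x. ennreal ((D N x)\<^sup>2) \<partial>M) \<le> (\<integral>\<^sup>+x. ennreal ((\<Sum>n. \<bar>h (n+N) x\<bar>)\<^sup>2) \<partial>M)"
      using ae by (rule nn_integral_mono_AE)
    also have "\<dots> \<le> ennreal ((\<Sum>n. nrm M (h (n+N)))\<^sup>2)" using B(2) .
    finally have I: "(\<integral>\<^sup>+x. ennreal ((D N x)\<^sup>2) \<partial>M) \<le> ennreal ((\<Sum>n. nrm M (h (n+N)))\<^sup>2)" .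
    have "D N \<in> L2 M" using L2_of_nn(1)[OF Dm I] by simp
    moreover have "(nrm M (D N))\<^sup>2 \<le> (\<Sum>n. nrm M (h (n+N)))\<^sup>2" using L2_of_nn(2)[OF Dm I] by simp
    then have "nrm M (D N) \<le> (\<Sum>n. nrm M (h (n+N)))"
      using tail0[of N] by (rule power2_le_imp_le)
    ultimately show ?thesis by simp
  qed
  have sL: "s \<in> L2 M" using DL[of 0] unfolding D_def by simp
  have int0: "(\<integral>x. s x \<partial>M) = 0"
  proof -
    have "\<bar>\<integral>x. s x \<partial>M\<bar> \<le> (\<Sum>n. nrm M (h (n+N)))" for N
    proof -
      have "(\<integral>x. D N x \<partial>M) = (\<integral>x. s x \<partial>M) - (\<Sum>n<N. \<integral>x. h n x \<partial>M)"
        unfolding D_def using L2_int[OF sL] L2_int[OF hL]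
        by (simp add: integral_sum)
      also have "\<dots> = (\<integral>x. s x \<partial>M)" using h unfolding L2_0_def by simp
      finally have "(\<integral>x. D N x \<partial>M) = (\<integral>x. s x \<partial>M)" .
      then show ?thesis using abs_integral_le_nrm[of "D N"] DL[of N] by simp
    qed
    moreover have "(\<lambda>N. (\<Sum>n. nrm M (h (n+N)))) \<longlonglongrightarrow> 0" by (rule suminf_exist_split2[OF sm])
    ultimately have "\<bar>\<integral>x. s x \<partial>M\<bar> \<le> 0"
      by (intro LIMSEQ_le_const[of _ 0]) auto
    then show ?thesis by simp
  qed
  have "s \<in> L2_0 M" using sL int0 unfolding L2_0_def L2_def by auto
  moreover have "\<forall>N. nrm M (\<lambda>x. s x - (\<Sum>n<N. h n x)) \<le> (\<Sum>n. nrm M (h (n+N)))"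
    using DL unfolding D_def by auto
  ultimately show ?thesis by blast
qed

definition lin0 :: "'a measure \<Rightarrow> (('a \<Rightarrow> real) \<Rightarrow> ('a \<Rightarrow> real)) \<Rightarrow> bool" where
  "lin0 M B \<longleftrightarrow> (\<forall>f\<in>L2_0 M. B f \<in> L2_0 M) \<and>
     (\<forall>f\<in>L2_0 M. \<forall>g\<in>L2_0 M. \<forall>a b. AE x in M. B (\<lambda>x. a * f x + b * g x) x = a * B f x + b * B g x)"
definition bnd :: "'a measure \<Rightarrow> (('a \<Rightarrow> real) \<Rightarrow> ('a \<Rightarrow> real)) \<Rightarrow> real \<Rightarrow> bool" where
  "bnd M B C \<longleftrightarrow> (\<forall>f\<in>L2_0 M. nrm M (B f) \<le> C * nrm M f)"
definition symop :: "'a measure \<Rightarrow> (('a \<Rightarrow> real) \<Rightarrow> ('a \<Rightarrow> real)) \<Rightarrow> bool" where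
  "symop M B \<longleftrightarrow> (\<forall>f\<in>L2_0 M. \<forall>g\<in>L2_0 M. ip M (B f) g = ip M f (B g))"
definition bij0 :: "'a measure \<Rightarrow> (('a \<Rightarrow> real) \<Rightarrow> ('a \<Rightarrow> real)) \<Rightarrow> bool" where
  "bij0 M D \<longleftrightarrow> (\<forall>f\<in>L2_0 M. (AE x in M. D f x = 0) \<longrightarrow> (AE x in M. f x = 0)) \<and>
     (\<forall>g\<in>L2_0 M. \<exists>f\<in>L2_0 M. AE x in M. D f x = g x)"

lemma spectrum0_iff: "l \<in> spectrum0 M K \<longleftrightarrow> \<not> bij0 M (\<lambda>f x. kop K f x - l * f x)"
  unfolding spectrum0_def bij0_def by simp

lemma L2_0_meas: "f \<in> L2_0 M \<Longrightarrow> f \<in> borel_measurable M"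
  unfolding L2_0_def by auto

lemma L2_0_L2: "f \<in> L2_0 M \<Longrightarrow> f \<in> L2 M"
  using L2_0_sub by auto

lemma lin0_in: "lin0 M B \<Longrightarrow> f \<in> L2_0 M \<Longrightarrow> B f \<in> L2_0 M"
  unfolding lin0_def by auto

lemma lin0_comb: "lin0 M B \<Longrightarrow> f \<in> L2_0 M \<Longrightarrow> g \<in> L2_0 M \<Longrightarrow>
   AE x in M. B (\<lambda>x. a * f x + b * g x) x = a * B f x + b * B g x"
  unfolding lin0_def by auto

context prob_space
begin

lemma ip_B_comb:
  assumes B: "lin0 M B" and f: "f \<in> L2_0 M" and g: "g \<in> L2_0 M" and h: "h \<in> L2 M"
  shows "ip M (B (\<lambda>x. a * f x + b * g x)) h = a * ip M (B f) h + b * ip M (B g) h"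
proof -
  have c: "(\<lambda>x. a * f x + b * g x) \<in> L2_0 M" using L2_0_lin[OF f g] .
  have "ip M (B (\<lambda>x. a * f x + b * g x)) h = ip M (\<lambda>x. a * B f x + b * B g x) h"
    using lin0_comb[OF B f g, of a b] lin0_in[OF B c] L2_0_lin[OF lin0_in[OF B f] lin0_in[OF B g], of a b] h
    by (intro ip_cong_meas) (auto simp: L2_0_meas L2_def)
  also have "\<dots> = a * ip M (B f) h + b * ip M (B g) h"
    using lin0_in[OF B f] lin0_in[OF B g] h by (intro ip_lin_left) (auto simp: L2_0_L2)
  finally show ?thesis .
qed

lemma bnd_zero_ae:
  assumes "lin0 M B" "bnd M B C" "f \<in> L2_0 M" "AE x in M. f x = 0"
  shows "AE x in M. B f x = 0"
proof -
  have "nrm M f = 0" using assms(3,4) nrm_eq0[of f M] by (simp add: L2_0_L2)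
  then have "nrm M (B f) \<le> 0" using assms(2,3) unfolding bnd_def by force
  then have "nrm M (B f) = 0" using nrm_nonneg[of M "B f"] by linarith
  then show ?thesis using nrm_eq0[of "B f" M] lin0_in[OF assms(1,3)] by (simp add: L2_0_L2)
qed

lemma bnd_cong_ae:
  assumes "lin0 M B" "bnd M B C" "f \<in> L2_0 M" "g \<in> L2_0 M" "AE x in M. f x = g x"
  shows "AE x in M. B f x = B g x"
proof -
  have d: "(\<lambda>x. 1 * f x + (-1) * g x) \<in> L2_0 M" using L2_0_lin[OF assms(3,4)] .
  have "AE x in M. B (\<lambda>x. 1 * f x + (-1) * g x) x = 0"
    using assms(5) by (intro bnd_zero_ae[OF assms(1,2) d]) auto
  moreover have "AE x in M. B (\<lambda>x. 1 * f x + (-1) * g x) x = 1 * B f x + (-1) * B g x"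
    by (rule lin0_comb[OF assms(1,3,4)])
  ultimately show ?thesis by eventually_elim simp
qed

lemma lin0_shift:
  assumes "lin0 M B"
  shows "lin0 M (\<lambda>f x. B f x - c * f x)"
  unfolding lin0_def
proof (intro conjI ballI allI)
  fix f assume f: "f \<in> L2_0 M"
  show "(\<lambda>x. B f x - c * f x) \<in> L2_0 M"
    using L2_0_lin[OF lin0_in[OF assms f] f, of 1 "-c"] by simp
next
  fix f g a b assume f: "f \<in> L2_0 M" and g: "g \<in> L2_0 M"
  show "AE x in M. B (\<lambda>x. a * f x + b * g x) x - c * (a * f x + b * g x) =
      a * (B f x - c * f x) + b * (B g x - c * g x)"
    using lin0_comb[OF assms f g, of a b] by eventually_elim (simp add: algebra_simps)
qed

lemma bnd_shift:
  assumes "lin0 M B" "bnd M B C"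
  shows "bnd M (\<lambda>f x. B f x - c * f x) (C + \<bar>c\<bar>)"
  unfolding bnd_def
proof
  fix f assume f: "f \<in> L2_0 M"
  have "nrm M (\<lambda>x. 1 * B f x + (-c) * f x) \<le> \<bar>1\<bar> * nrm M (B f) + \<bar>-c\<bar> * nrm M f"
    using lin0_in[OF assms(1) f] f by (intro nrm_lin_le) (auto simp: L2_0_L2)
  also have "\<dots> \<le> C * nrm M f + \<bar>c\<bar> * nrm M f" using assms(2) f unfolding bnd_def by auto
  finally show "nrm M (\<lambda>x. B f x - c * f x) \<le> (C + \<bar>c\<bar>) * nrm M f" by (simp add: algebra_simps)
qed

lemma symop_shift:
  assumes "lin0 M B" "symop M B"
  shows "symop M (\<lambda>f x. B f x - c * f x)"
  unfolding symop_def
proof (intro ballI)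
  fix f g assume f: "f \<in> L2_0 M" and g: "g \<in> L2_0 M"
  have "ip M (\<lambda>x. 1 * B f x + (-c) * f x) g = ip M (B f) g - c * ip M f g"
    using lin0_in[OF assms(1) f] f g by (subst ip_lin_left) (auto simp: L2_0_L2)
  moreover have "ip M f (\<lambda>x. 1 * B g x + (-c) * g x) = ip M f (B g) - c * ip M f g"
    using lin0_in[OF assms(1) g] f g by (subst ip_lin_right) (auto simp: L2_0_L2)
  ultimately show "ip M (\<lambda>x. B f x - c * f x) g = ip M f (\<lambda>x. B g x - c * g x)"
    using assms(2) f g unfolding symop_def by simp
qed

lemma lin0_neg:
  assumes "lin0 M B"
  shows "lin0 M (\<lambda>f x. - B f x)"
  unfolding lin0_def
proof (intro conjI ballI allI)
  fix f assume f: "f \<in> L2_0 M"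
  show "(\<lambda>x. - B f x) \<in> L2_0 M"
    using L2_0_lin[OF lin0_in[OF assms f] f, of "-1" 0] by simp
next
  fix f g a b assume f: "f \<in> L2_0 M" and g: "g \<in> L2_0 M"
  show "AE x in M. - B (\<lambda>x. a * f x + b * g x) x = a * (- B f x) + b * (- B g x)"
    using lin0_comb[OF assms f g, of a b] by eventually_elim (simp add: algebra_simps)
qed

lemma bij0_neg:
  assumes b: "bij0 M D"
  shows "bij0 M (\<lambda>f x. - D f x)"
  unfolding bij0_def
proof (intro conjI ballI impI)
  fix f assume "f \<in> L2_0 M" "AE x in M. - D f x = 0"
  then show "AE x in M. f x = 0" using b unfolding bij0_def by auto
next
  fix g assume g: "g \<in> L2_0 M"
  have m: "(\<lambda>x. (-1) * g x + 0 * g x) \<in> L2_0 M" using L2_0_lin[OF g g] .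
  have "\<forall>g\<in>L2_0 M. \<exists>f\<in>L2_0 M. AE x in M. D f x = g x" using b unfolding bij0_def by (rule conjunct2)
  then have "\<exists>f\<in>L2_0 M. AE x in M. D f x = (-1) * g x + 0 * g x" using m by (rule bspec)
  then obtain f where f: "f \<in> L2_0 M" "AE x in M. D f x = (-1) * g x + 0 * g x" by (rule bexE)
  have "AE x in M. - D f x = g x" using f(2) by eventually_elim simp
  then show "\<exists>f\<in>L2_0 M. AE x in M. - D f x = g x" using f(1) by blast
qed

end

lemma quad_disc:
  fixes a b c :: real
  assumes q: "\<And>t. 0 \<le> a - 2 * t * b + t\<^sup>2 * c" and c: "0 \<le> c"
  shows "b\<^sup>2 \<le> a * c"
proof (cases "c = 0")
  case True
  show ?thesis
  proof (cases "b = 0")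
    case False
    have "0 \<le> a - 2 * ((a + 1) / (2 * b)) * b + ((a + 1) / (2 * b))\<^sup>2 * c" by (rule q)
    then show ?thesis using False True by (simp add: field_simps)
  qed (use True in simp)
next
  case False
  then have cp: "c > 0" using c by simp
  have "0 \<le> a - 2 * (b / c) * b + (b / c)\<^sup>2 * c" by (rule q)
  also have "\<dots> = a - b\<^sup>2 / c" using cp by (simp add: power2_eq_square field_simps)
  finally show ?thesis using cp by (simp add: field_simps)
qed

context prob_space
begin

lemma L2_0_scale: "f \<in> L2_0 M \<Longrightarrow> (\<lambda>x. c * f x) \<in> L2_0 M"
  using L2_0_lin[of f f c 0] by simp

lemma L2_0_add: "f \<in> L2_0 M \<Longrightarrow> g \<in> L2_0 M \<Longrightarrow> (\<lambda>x. f x + g x) \<in> L2_0 M"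
  using L2_0_lin[of f g 1 1] by simp

lemma L2_0_diff: "f \<in> L2_0 M \<Longrightarrow> g \<in> L2_0 M \<Longrightarrow> (\<lambda>x. f x - g x) \<in> L2_0 M"
  using L2_0_lin[of f g 1 "-1"] by simp

lemma L2_0_sum: "(\<And>n. u n \<in> L2_0 M) \<Longrightarrow> (\<lambda>x. \<Sum>n<(N::nat). u n x) \<in> L2_0 M"
proof (induction N)
  case 0 then show ?case using L2_0_zero by simp
next
  case (Suc N) then show ?case using L2_0_add[of "\<lambda>x. \<Sum>n<N. u n x" "u N"] by simp
qed

lemma Q_expand:
  assumes B: "lin0 M B" "symop M B" and f: "f \<in> L2_0 M" and g: "g \<in> L2_0 M"
  shows "ip M (B (\<lambda>x. 1 * f x + s * g x)) (\<lambda>x. 1 * f x + s * g x)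
       = ip M (B f) f + 2 * s * ip M (B f) g + s\<^sup>2 * ip M (B g) g"
proof -
  have w: "(\<lambda>x. 1 * f x + s * g x) \<in> L2 M" using L2_0_lin[OF f g] by (rule L2_0_L2)
  have Bf: "B f \<in> L2 M" "B g \<in> L2 M" using lin0_in[OF B(1) f] lin0_in[OF B(1) g] by (auto simp: L2_0_L2)
  have "ip M (B (\<lambda>x. 1 * f x + s * g x)) (\<lambda>x. 1 * f x + s * g x)
      = 1 * ip M (B f) (\<lambda>x. 1 * f x + s * g x) + s * ip M (B g) (\<lambda>x. 1 * f x + s * g x)"
    by (rule ip_B_comb[OF B(1) f g w])
  also have "\<dots> = (ip M (B f) f + s * ip M (B f) g) + s * (ip M (B g) f + s * ip M (B g) g)"
    using ip_lin_right[of f M g "B f" 1 s] ip_lin_right[of f M g "B g" 1 s] f g Bf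
    by (simp add: L2_0_L2)
  also have "ip M (B g) f = ip M (B f) g"
    using B(2) f g unfolding symop_def by (simp add: ip_sym)
  finally show ?thesis by (simp add: power2_eq_square algebra_simps)
qed

lemma psd_CS:
  assumes A: "lin0 M A" "symop M A" and pos: "\<And>u. u \<in> L2_0 M \<Longrightarrow> 0 \<le> ip M (A u) u"
    and u: "u \<in> L2_0 M" and v: "v \<in> L2_0 M"
  shows "(ip M (A u) v)\<^sup>2 \<le> ip M (A u) u * ip M (A v) v"
proof (rule quad_disc)
  fix t
  have "0 \<le> ip M (A (\<lambda>x. 1 * u x + (-t) * v x)) (\<lambda>x. 1 * u x + (-t) * v x)"
    by (rule pos[OF L2_0_lin[OF u v]])
  also have "\<dots> = ip M (A u) u - 2 * t * ip M (A u) v + t\<^sup>2 * ip M (A v) v"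
    using Q_expand[OF A u v, of "-t"] by simp
  finally show "0 \<le> ip M (A u) u - 2 * t * ip M (A u) v + t\<^sup>2 * ip M (A v) v" .
qed (rule pos[OF v])

lemma numrad:
  assumes B: "lin0 M B" "bnd M B C" "symop M B"
    and num: "\<And>f. f \<in> L2_0 M \<Longrightarrow> \<bar>ip M (B f) f\<bar> \<le> \<rho> * (nrm M f)\<^sup>2"
  shows "bnd M B \<rho>"
  unfolding bnd_def
proof
  fix f assume f: "f \<in> L2_0 M"
  define g where "g = B f"
  have g: "g \<in> L2_0 M" unfolding g_def by (rule lin0_in[OF B(1) f])
  define a where "a = nrm M f"
  define b where "b = nrm M g"
  have a0: "0 \<le> a" "0 \<le> b" unfolding a_def b_def by (auto simp: nrm_nonneg)
  show "nrm M (B f) \<le> \<rho> * nrm M f"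
  proof (cases "a = 0")
    case True
    then have "nrm M (B f) \<le> 0" using B(2) f unfolding bnd_def a_def by force
    then show ?thesis using True a_def by simp
  next
    case False
    then have ap: "a > 0" using a0 by simp
    have rho: "0 \<le> \<rho>"
    proof -
      have "\<bar>ip M (B f) f\<bar> \<le> \<rho> * a\<^sup>2" using num[OF f] unfolding a_def .
      then have "0 \<le> \<rho> * a\<^sup>2" using abs_ge_zero order_trans by blast
      then show ?thesis using ap by (simp add: zero_le_mult_iff)
    qed
    show ?thesis
    proof (cases "b = 0")
      case True then show ?thesis using rho ap unfolding b_def g_def a_def by simp
    next
      case False
      then have bp: "b > 0" using a0 by simp
      define t where "t = a / b"
      have tp: "t > 0" unfolding t_def using ap bp by simp
      have ipfg: "ip M (B f) g = b\<^sup>2" unfolding b_def g_def by (simp add: nrm_sq)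
      have fL: "f \<in> L2 M" and gL: "g \<in> L2 M" using f g by (auto simp: L2_0_L2)
      have nu: "(nrm M (\<lambda>x. 1 * f x + s * g x))\<^sup>2 = a\<^sup>2 + 2 * s * ip M f g + s\<^sup>2 * b\<^sup>2" for s
        unfolding nrm_sq a_def b_def using ip_expand[OF fL gL, of 1 s] by (simp add: nrm_sq)
      have Qu: "ip M (B (\<lambda>x. 1 * f x + s * g x)) (\<lambda>x. 1 * f x + s * g x) \<le> \<rho> * (a\<^sup>2 + 2 * s * ip M f g + s\<^sup>2 * b\<^sup>2)" for s
      proof -
        have "ip M (B (\<lambda>x. 1 * f x + s * g x)) (\<lambda>x. 1 * f x + s * g x) \<le> \<bar>ip M (B (\<lambda>x. 1 * f x + s * g x)) (\<lambda>x. 1 * f x + s * g x)\<bar>" by (rule abs_ge_self)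
        also have "\<dots> \<le> \<rho> * (nrm M (\<lambda>x. 1 * f x + s * g x))\<^sup>2" by (rule num[OF L2_0_lin[OF f g]])
        finally show ?thesis unfolding nu .
      qed
      have Qv: "- \<rho> * (a\<^sup>2 + 2 * s * ip M f g + s\<^sup>2 * b\<^sup>2) \<le> ip M (B (\<lambda>x. 1 * f x + s * g x)) (\<lambda>x. 1 * f x + s * g x)" for s
        using num[OF L2_0_lin[OF f g, of 1 s]] nu[of s] by (simp add: abs_le_iff)
      have "4 * t * b\<^sup>2 = ip M (B (\<lambda>x. 1 * f x + t * g x)) (\<lambda>x. 1 * f x + t * g x)
          - ip M (B (\<lambda>x. 1 * f x + (-t) * g x)) (\<lambda>x. 1 * f x + (-t) * g x)"
        using Q_expand[OF B(1,3) f g, of t] Q_expand[OF B(1,3) f g, of "-t"] ipfg by simp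
      also have "\<dots> \<le> \<rho> * (a\<^sup>2 + 2 * t * ip M f g + t\<^sup>2 * b\<^sup>2) + \<rho> * (a\<^sup>2 + 2 * (-t) * ip M f g + (-t)\<^sup>2 * b\<^sup>2)"
        using Qu[of t] Qv[of "-t"] by simp
      also have "\<dots> = 2 * \<rho> * (a\<^sup>2 + t\<^sup>2 * b\<^sup>2)" by (simp add: algebra_simps)
      also have "t\<^sup>2 * b\<^sup>2 = a\<^sup>2" unfolding t_def using bp by (simp add: power2_eq_square)
      finally have "4 * t * b\<^sup>2 \<le> 4 * \<rho> * a\<^sup>2" by simp
      then have "4 * a * b \<le> 4 * \<rho> * a\<^sup>2" unfolding t_def using bp by (simp add: power2_eq_square)
      then have "b \<le> \<rho> * a" using ap by (simp add: power2_eq_square)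
      then show ?thesis unfolding b_def g_def a_def .
    qed
  qed
qed

end

context prob_space
begin

lemma lin0_zero:
  assumes "lin0 M E" shows "AE x in M. E (\<lambda>x. 0) x = 0"
  using lin0_comb[OF assms L2_0_zero L2_0_zero, of 0 0] by simp

lemma lin0_sum:
  fixes N :: nat
  assumes E: "lin0 M E" and u: "\<And>n. u n \<in> L2_0 M"
  shows "AE x in M. E (\<lambda>x. \<Sum>n<N. u n x) x = (\<Sum>n<N. E (u n) x)"
proof (induction N)
  case 0 then show ?case using lin0_zero[OF E] by simp
next
  case (Suc N)
  have "AE x in M. E (\<lambda>x. 1 * (\<Sum>n<N. u n x) + 1 * u N x) x = 1 * E (\<lambda>x. \<Sum>n<N. u n x) x + 1 * E (u N) x"
    by (rule lin0_comb[OF E L2_0_sum[OF u] u])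
  with Suc show ?case by eventually_elim simp
qed

lemma lin0_scale:
  assumes E: "lin0 M E" and f: "f \<in> L2_0 M"
  shows "AE x in M. E (\<lambda>x. c * f x) x = c * E f x"
  using lin0_comb[OF E f f, of c 0] by simp

lemma neumann:
  assumes E: "lin0 M E" "bnd M E \<rho>" and rho: "0 \<le> \<rho>" "\<rho> < \<bar>\<mu>\<bar>"
  shows "bij0 M (\<lambda>f x. E f x - \<mu> * f x)"
  unfolding bij0_def
proof (intro conjI ballI impI)
  have mu0: "\<mu> \<noteq> 0" using rho by auto
  fix f assume f: "f \<in> L2_0 M" and z: "AE x in M. E f x - \<mu> * f x = 0"
  have "AE x in M. E f x = \<mu> * f x" using z by eventually_elim simp
  then have "nrm M (E f) = nrm M (\<lambda>x. \<mu> * f x)"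
    using lin0_in[OF E(1) f] L2_0_scale[OF f] by (intro nrm_cong) (auto simp: L2_0_meas)
  also have "\<dots> = \<bar>\<mu>\<bar> * nrm M f" using f by (simp add: nrm_scale L2_0_L2)
  finally have "\<bar>\<mu>\<bar> * nrm M f \<le> \<rho> * nrm M f" using E(2) f unfolding bnd_def by auto
  then have "nrm M f = 0" using rho nrm_nonneg[of M f]
    by (metis mult_le_cancel_right not_le order.strict_trans2 order_less_le)
  then show "AE x in M. f x = 0" using nrm_eq0[of f M] f by (simp add: L2_0_L2)
next
  have mu0: "\<mu> \<noteq> 0" using rho by auto
  fix g assume g: "g \<in> L2_0 M"
  define it where "it n = (E ^^ n) g" for n
  have itL: "it n \<in> L2_0 M" for n
    unfolding it_def by (induction n) (auto simp: g lin0_in[OF E(1)])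
  have itS: "it (Suc n) = E (it n)" for n unfolding it_def by simp
  have itn: "nrm M (it n) \<le> \<rho> ^ n * nrm M g" for n
  proof (induction n)
    case 0 then show ?case unfolding it_def by simp
  next
    case (Suc n)
    have "nrm M (it (Suc n)) \<le> \<rho> * nrm M (it n)" unfolding itS using E(2) itL[of n] unfolding bnd_def by auto
    also have "\<dots> \<le> \<rho> * (\<rho> ^ n * nrm M g)" using Suc rho by (intro mult_left_mono) auto
    finally show ?case by simp
  qed
  define h where "h n = (\<lambda>x. (1 / \<mu> ^ Suc n) * it n x)" for n
  have hL: "h n \<in> L2_0 M" for n unfolding h_def by (rule L2_0_scale[OF itL])
  define q where "q = \<rho> / \<bar>\<mu>\<bar>"
  have q: "0 \<le> q" "q < 1" unfolding q_def using rho by auto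
  have hn: "nrm M (h n) \<le> (nrm M g / \<bar>\<mu>\<bar>) * q ^ n" for n
  proof -
    have ab: "\<bar>1 / \<mu> ^ Suc n\<bar> = (1 / \<bar>\<mu>\<bar> ^ Suc n)" by (simp add: power_abs abs_mult)
    have "nrm M (h n) = \<bar>1 / \<mu> ^ Suc n\<bar> * nrm M (it n)"
      unfolding h_def by (rule nrm_scale[OF L2_0_L2[OF itL]])
    also have "\<dots> = (1 / \<bar>\<mu>\<bar> ^ Suc n) * nrm M (it n)" unfolding ab ..
    also have "\<dots> \<le> (1 / \<bar>\<mu>\<bar> ^ Suc n) * (\<rho> ^ n * nrm M g)" using itn[of n] by (intro mult_left_mono) auto
    also have "\<dots> = (nrm M g / \<bar>\<mu>\<bar>) * q ^ n" unfolding q_def using mu0 by (simp add: field_simps power_divide)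
    finally show ?thesis .
  qed
  have sm: "summable (\<lambda>n. nrm M (h n))"
  proof (rule summable_comparison_test)
    show "\<exists>N. \<forall>n\<ge>N. norm (nrm M (h n)) \<le> (nrm M g / \<bar>\<mu>\<bar>) * q ^ n"
      using hn by (auto simp: nrm_nonneg)
    show "summable (\<lambda>n. (nrm M g / \<bar>\<mu>\<bar>) * q ^ n)" using q by (intro summable_mult summable_geometric) auto
  qed
  obtain s where s: "s \<in> L2_0 M" and sb: "\<And>N. nrm M (\<lambda>x. s x - (\<Sum>n<N. h n x)) \<le> (\<Sum>n. nrm M (h (n+N)))"
    using L2_0_series[OF hL sm] by blast
  define S where "S N = (\<lambda>x. \<Sum>n<N. h n x)" for N
  have SL: "S N \<in> L2_0 M" for N unfolding S_def by (rule L2_0_sum[OF hL])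
  define T where "T N = (\<Sum>n. nrm M (h (n+N)))" for N
  have T0: "T \<longlonglongrightarrow> 0" unfolding T_def by (rule suminf_exist_split2[OF sm])
  have Dn: "nrm M (\<lambda>x. s x - S N x) \<le> T N" for N unfolding S_def T_def by (rule sb)
  have ES: "AE x in M. E (S N) x = \<mu> * S (Suc N) x - g x" for N
  proof -
    have "AE x in M. E (S N) x = (\<Sum>n<N. E (h n) x)" unfolding S_def by (rule lin0_sum[OF E(1) hL])
    moreover have "AE x in M. \<forall>n. E (h n) x = (1 / \<mu> ^ Suc n) * it (Suc n) x"
      unfolding AE_all_countable
    proof
      fix n show "AE x in M. E (h n) x = (1 / \<mu> ^ Suc n) * it (Suc n) x"
        unfolding h_def itS by (rule lin0_scale[OF E(1) itL])
    qed
    ultimately show ?thesis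
    proof eventually_elim
      case (elim x)
      have "\<mu> * S (Suc N) x = (\<Sum>n<Suc N. \<mu> * ((1 / \<mu> ^ Suc n) * it n x))"
        unfolding S_def h_def by (rule sum_distrib_left)
      also have "\<dots> = (\<Sum>n<Suc N. (1 / \<mu> ^ n) * it n x)"
        using mu0 by (intro sum.cong) (auto simp: field_simps)
      also have "\<dots> = g x + (\<Sum>n<N. (1 / \<mu> ^ Suc n) * it (Suc n) x)"
        unfolding sum.lessThan_Suc_shift by (simp add: it_def)
      finally show ?case using elim by simp
    qed
  qed
  define R where "R = (\<lambda>x. E s x - \<mu> * s x + g x)"
  have RL: "R \<in> L2_0 M" unfolding R_def
    using L2_0_add[OF L2_0_diff[OF lin0_in[OF E(1) s] L2_0_scale[OF s]] g] .
  have Rb: "nrm M R \<le> \<rho> * T N + \<bar>\<mu>\<bar> * T (Suc N)" for N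
  proof -
    have d1: "(\<lambda>x. s x - S N x) \<in> L2_0 M" "(\<lambda>x. s x - S (Suc N) x) \<in> L2_0 M"
      using L2_0_diff[OF s SL] by auto
    have Es: "AE x in M. E s x = E (\<lambda>x. s x - S N x) x + E (S N) x"
      using lin0_comb[OF E(1) d1(1) SL[of N], of 1 1] by simp
    have "AE x in M. R x = 1 * E (\<lambda>x. s x - S N x) x + (-\<mu>) * (s x - S (Suc N) x)"
      using Es ES[of N] unfolding R_def by eventually_elim (simp add: algebra_simps)
    then have "nrm M R = nrm M (\<lambda>x. 1 * E (\<lambda>x. s x - S N x) x + (-\<mu>) * (s x - S (Suc N) x))"
      using RL L2_0_lin[OF lin0_in[OF E(1) d1(1)] d1(2), of 1 "-\<mu>"]
      by (intro nrm_cong) (auto simp: L2_0_meas)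
    also have "\<dots> \<le> \<bar>1\<bar> * nrm M (E (\<lambda>x. s x - S N x)) + \<bar>-\<mu>\<bar> * nrm M (\<lambda>x. s x - S (Suc N) x)"
      using lin0_in[OF E(1) d1(1)] d1(2) by (intro nrm_lin_le) (auto simp: L2_0_L2)
    also have "\<dots> \<le> \<rho> * T N + \<bar>\<mu>\<bar> * T (Suc N)"
    proof -
      have "nrm M (E (\<lambda>x. s x - S N x)) \<le> \<rho> * nrm M (\<lambda>x. s x - S N x)" using E(2) d1(1) unfolding bnd_def by auto
      also have "\<dots> \<le> \<rho> * T N" using Dn[of N] rho by (intro mult_left_mono) auto
      moreover have "\<bar>\<mu>\<bar> * nrm M (\<lambda>x. s x - S (Suc N) x) \<le> \<bar>\<mu>\<bar> * T (Suc N)"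
        using Dn[of "Suc N"] by (intro mult_left_mono) auto
      ultimately show ?thesis by simp
    qed
    finally show ?thesis .
  qed
  have "(\<lambda>N. \<rho> * T N + \<bar>\<mu>\<bar> * T (Suc N)) \<longlonglongrightarrow> \<rho> * 0 + \<bar>\<mu>\<bar> * 0"
    using T0 LIMSEQ_Suc[OF T0] by (intro tendsto_intros)
  then have "nrm M R \<le> 0" using Rb by (intro LIMSEQ_le_const[of _ 0]) (auto intro: order_trans)
  then have "nrm M R = 0" using nrm_nonneg[of M R] by linarith
  then have R0: "AE x in M. R x = 0" using nrm_eq0[of R M] RL by (simp add: L2_0_L2)
  have "AE x in M. E (\<lambda>x. (-1) * s x) x = (-1) * E s x" by (rule lin0_scale[OF E(1) s])
  with R0 have "AE x in M. E (\<lambda>x. (-1) * s x) x - \<mu> * ((-1) * s x) = g x"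
    unfolding R_def by eventually_elim (simp add: algebra_simps)
  then show "\<exists>f\<in>L2_0 M. AE x in M. E f x - \<mu> * f x = g x" using L2_0_scale[OF s, of "-1"] by (intro bexI[where x="\<lambda>x. (-1) * s x"])
qed

end

lemma geom_tail: "(\<Sum>n. (1/8::real) ^ (n + N) / 4) = (2/7) * (1/8) ^ N"
proof -
  have sg: "summable (\<lambda>n. (1/8::real) ^ n)" by (rule summable_geometric) simp
  have "(\<Sum>n. (1/8::real) ^ (n + N) / 4) = (\<Sum>n. ((1/8) ^ N / 4) * (1/8::real) ^ n)"
    by (simp add: power_add algebra_simps)
  also have "\<dots> = ((1/8) ^ N / 4) * (\<Sum>n. (1/8::real) ^ n)" by (rule suminf_mult[OF sg])
  also have "(\<Sum>n. (1/8::real) ^ n) = 8/7" by (subst suminf_geometric) auto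
  finally show ?thesis by simp
qed

lemma abs_lb: "p / 4 \<le> \<bar>A\<bar> \<Longrightarrow> \<bar>B\<bar> \<le> p / 28 \<Longrightarrow> 0 \<le> p \<Longrightarrow> p / 8 \<le> \<bar>A + B\<bar>"
  for p A B :: real by arith

context prob_space
begin

lemma ub_symmetric:
  assumes S: "lin0 M S" "symop M S" and z: "\<And>g. g \<in> L2_0 M \<Longrightarrow> (AE x in M. g x = 0) \<Longrightarrow> (AE x in M. S g x = 0)"
  shows "\<exists>C. \<forall>g\<in>L2_0 M. nrm M (S g) \<le> C * nrm M g"
proof (rule ccontr)
  assume nb: "\<not> ?thesis"
  have big: "\<exists>v\<in>L2_0 M. nrm M v = 1 \<and> R < nrm M (S v)" for R
  proof -
    from nb obtain g where g: "g \<in> L2_0 M" and gR: "nrm M (S g) > max R 0 * nrm M g"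
      by (meson not_le)
    have "nrm M g \<noteq> 0"
    proof
      assume "nrm M g = 0"
      then have "AE x in M. g x = 0" using nrm_eq0[of g M] g by (simp add: L2_0_L2)
      then have "AE x in M. S g x = 0" by (rule z[OF g])
      then have "nrm M (S g) = 0" using nrm_eq0[of "S g" M] lin0_in[OF S(1) g] by (simp add: L2_0_L2)
      with gR \<open>nrm M g = 0\<close> show False by simp
    qed
    then have gp: "nrm M g > 0" using nrm_nonneg[of M g] by linarith
    define v where "v = (\<lambda>x. (1 / nrm M g) * g x)"
    have v: "v \<in> L2_0 M" unfolding v_def by (rule L2_0_scale[OF g])
    have nv: "nrm M v = 1" unfolding v_def nrm_scale[OF L2_0_L2[OF g]] using gp by simp
    have "AE x in M. S v x = (1 / nrm M g) * S g x" unfolding v_def by (rule lin0_scale[OF S(1) g])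
    then have "nrm M (S v) = nrm M (\<lambda>x. (1 / nrm M g) * S g x)"
      using lin0_in[OF S(1) v] L2_0_meas[OF L2_0_scale[OF lin0_in[OF S(1) g], of "1 / nrm M g"]] by (intro nrm_cong) (auto simp: L2_0_meas)
    also have "\<dots> = nrm M (S g) / nrm M g" unfolding nrm_scale[OF L2_0_L2[OF lin0_in[OF S(1) g]]] using gp by simp
    finally have "nrm M (S v) = nrm M (S g) / nrm M g" .
    moreover have "R < nrm M (S g) / nrm M g"
    proof -
      have "R * nrm M g \<le> max R 0 * nrm M g" using gp by (intro mult_right_mono) auto
      then have "R * nrm M g < nrm M (S g)" using gR by linarith
      then show ?thesis using gp by (simp add: pos_less_divide_eq)
    qed
    ultimately show ?thesis using v nv by auto
  qed
  define V where "V k = (SOME v. v \<in> L2_0 M \<and> nrm M v = 1 \<and> 8 ^ Suc k * real (Suc k) < nrm M (S v))" for k :: nat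
  have V: "V k \<in> L2_0 M \<and> nrm M (V k) = 1 \<and> 8 ^ Suc k * real (Suc k) < nrm M (S (V k))" for k
  proof -
    have "\<exists>v. v \<in> L2_0 M \<and> nrm M v = 1 \<and> 8 ^ Suc k * real (Suc k) < nrm M (S v)"
      using big[of "8 ^ Suc k * real (Suc k)"] by (simp only: Bex_def)
    then show ?thesis unfolding V_def by (rule someI_ex)
  qed
  define Nk where "Nk k = nrm M (S (V k))" for k
  have Nkp: "Nk k > 8 ^ Suc k * real (Suc k)" for k using V[of k] unfolding Nk_def by simp
  have Nk0: "Nk k > 0" for k using Nkp[of k] by (smt (verit) of_nat_0_le_iff zero_le_mult_iff zero_less_power)
  have SV: "S (V k) \<in> L2_0 M" for k using lin0_in[OF S(1)] V by auto
  define W where "W k = (\<lambda>x. (1 / Nk k) * S (V k) x)" for k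
  have WL: "W k \<in> L2_0 M" for k unfolding W_def by (rule L2_0_scale[OF SV])
  have ipW: "ip M (W k) (S (V k)) = Nk k" for k
  proof -
    have "ip M (W k) (S (V k)) = (1 / Nk k) * ip M (S (V k)) (S (V k))"
      unfolding W_def using ip_lin_left[of "S (V k)" M "S (V k)" "S (V k)" "1 / Nk k" 0] SV[of k]
      by (simp add: L2_0_L2)
    also have "\<dots> = Nk k" unfolding Nk_def using Nk0[of k] by (simp add: nrm_sq[symmetric] Nk_def power2_eq_square)
    finally show ?thesis .
  qed
  define r where "r k = (1/8::real) ^ k" for k :: nat
  define X where "X = rec_nat (\<lambda>x. 0::real) (\<lambda>k Xk. (\<lambda>x. Xk x + ((if 0 \<le> ip M Xk (S (V k)) then 1 else -1) * (r k / 4)) * W k x))"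
  define cc where "cc k = (if 0 \<le> ip M (X k) (S (V k)) then 1 else -1) * (r k / 4)" for k
  define d where "d k = (\<lambda>x. cc k * W k x)" for k
  have X0: "X 0 = (\<lambda>x. 0)" unfolding X_def by simp
  have XS: "X (Suc k) = (\<lambda>x. X k x + d k x)" for k unfolding X_def d_def cc_def by simp
  have Xsum: "X k = (\<lambda>x. \<Sum>n<k. d n x)" for k
    by (induction k) (simp_all add: X0 XS)
  have dL: "d k \<in> L2_0 M" for k unfolding d_def by (rule L2_0_scale[OF WL])
  have nW: "nrm M (W k) = 1" for k
    unfolding W_def nrm_scale[OF L2_0_L2[OF SV]] using Nk0[of k] by (simp add: Nk_def)
  have nd: "nrm M (d k) = r k / 4" for k
    unfolding d_def nrm_scale[OF L2_0_L2[OF WL[of k]]] nW[of k] cc_def by (simp add: r_def)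
  have sm: "summable (\<lambda>n. nrm M (d n))" unfolding nd r_def
    by (intro summable_divide summable_geometric) simp
  obtain s where s: "s \<in> L2_0 M" and sb: "\<And>N. nrm M (\<lambda>x. s x - (\<Sum>n<N. d n x)) \<le> (\<Sum>n. nrm M (d (n+N)))"
    using L2_0_series[OF dL sm] by blast
  have XL: "X k \<in> L2_0 M" for k unfolding Xsum by (rule L2_0_sum[OF dL])
  have tail: "nrm M (\<lambda>x. s x - X N x) \<le> (2/7) * r N" for N
    using sb[of N] unfolding Xsum nd r_def geom_tail by simp
  have key: "real k < \<bar>ip M s (S (V k))\<bar>" for k
  proof -
    define a where "a = ip M (X k) (S (V k))"
    have SVL: "S (V k) \<in> L2 M" using SV by (simp add: L2_0_L2)
    have e1: "ip M (X (Suc k)) (S (V k)) = a + cc k * Nk k"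
      unfolding XS d_def a_def using ip_lin_left[of "X k" M "W k" "S (V k)" 1 "cc k"] XL WL SVL ipW[of k]
      by (simp add: L2_0_L2)
    have rp: "r k > 0" unfolding r_def by simp
    have e2: "r k / 4 * Nk k \<le> \<bar>a + cc k * Nk k\<bar>"
    proof -
      have p: "0 < r k / 4 * Nk k" using rp Nk0[of k] by simp
      show ?thesis
      proof (cases "0 \<le> a")
        case True
        then have "cc k * Nk k = r k / 4 * Nk k" unfolding cc_def a_def by simp
        then have "r k / 4 * Nk k \<le> a + cc k * Nk k" using True by linarith
        then show ?thesis by (rule order_trans[OF _ abs_ge_self])
      next
        case False
        then have "cc k * Nk k = - (r k / 4 * Nk k)" unfolding cc_def a_def by simp
        then have "r k / 4 * Nk k \<le> - (a + cc k * Nk k)" using False by linarith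
        then show ?thesis by (rule order_trans[OF _ abs_ge_minus_self])
      qed
    qed
    have e3: "\<bar>ip M (\<lambda>x. s x - X (Suc k) x) (S (V k))\<bar> \<le> (2/7) * r (Suc k) * Nk k"
    proof -
      have "\<bar>ip M (\<lambda>x. s x - X (Suc k) x) (S (V k))\<bar> \<le> nrm M (\<lambda>x. s x - X (Suc k) x) * nrm M (S (V k))"
        using L2_0_diff[OF s XL] SVL by (intro CS) (auto simp: L2_0_L2)
      also have "\<dots> \<le> (2/7) * r (Suc k) * Nk k" unfolding Nk_def[symmetric]
        using tail[of "Suc k"] Nk0[of k] by (intro mult_right_mono) auto
      finally show ?thesis .
    qed
    have e4: "ip M s (S (V k)) = ip M (X (Suc k)) (S (V k)) + ip M (\<lambda>x. s x - X (Suc k) x) (S (V k))"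
      using ip_lin_left[of s M "X (Suc k)" "S (V k)" 1 "-1"] s XL SVL by (simp add: L2_0_L2)
    have "(2/7) * r (Suc k) * Nk k = (r k * Nk k) / 28" unfolding r_def by simp
    then have e3': "\<bar>ip M (\<lambda>x. s x - X (Suc k) x) (S (V k))\<bar> \<le> (r k * Nk k) / 28" using e3 by linarith
    have e2': "(r k * Nk k) / 4 \<le> \<bar>a + cc k * Nk k\<bar>" using e2 by simp
    have p0: "0 \<le> r k * Nk k" using rp Nk0[of k] by simp
    have "(r k * Nk k) / 8 \<le> \<bar>ip M s (S (V k))\<bar>"
      unfolding e4 e1 using abs_lb[OF e2' e3' p0] .
    then have "r k / 8 * Nk k \<le> \<bar>ip M s (S (V k))\<bar>" by simp
    moreover have "real k < r k / 8 * Nk k"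
    proof -
      have "r k / 8 * (8 ^ Suc k * real (Suc k)) = real (Suc k)"
        unfolding r_def by (simp add: power_divide field_simps)
      moreover have "r k / 8 * (8 ^ Suc k * real (Suc k)) < r k / 8 * Nk k"
        using Nkp[of k] rp by (intro mult_strict_left_mono) auto
      moreover have "real (Suc k) = real k + 1" by simp
      ultimately show ?thesis by linarith
    qed
    ultimately show ?thesis by linarith
  qed
  have Ss: "S s \<in> L2_0 M" using lin0_in[OF S(1) s] .
  obtain k :: nat where k: "nrm M (S s) < real k" using reals_Archimedean2 by blast
  have "\<bar>ip M s (S (V k))\<bar> = \<bar>ip M (S s) (V k)\<bar>" using S(2) s V[of k] unfolding symop_def by simp
  also have "\<dots> \<le> nrm M (S s) * nrm M (V k)" using Ss V[of k] by (intro CS) (auto simp: L2_0_L2)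
  also have "\<dots> = nrm M (S s)" using V[of k] by simp
  finally show False using key[of k] k by simp
qed

end

context prob_space
begin

lemma symop_neg:
  assumes "lin0 M D" "symop M D"
  shows "symop M (\<lambda>f x. - D f x)"
  using symop_shift[OF lin0_neg[OF assms(1)], of 0] assms
proof -
  show ?thesis unfolding symop_def
  proof (intro ballI)
    fix f g assume f: "f \<in> L2_0 M" and g: "g \<in> L2_0 M"
    have "ip M (\<lambda>x. (-1) * D f x + 0 * D f x) g = - ip M (D f) g"
      using lin0_in[OF assms(1) f] g by (subst ip_lin_left) (auto simp: L2_0_L2)
    moreover have "ip M f (\<lambda>x. (-1) * D g x + 0 * D g x) = - ip M f (D g)"
      using lin0_in[OF assms(1) g] f by (subst ip_lin_right) (auto simp: L2_0_L2)
    ultimately show "ip M (\<lambda>x. - D f x) g = ip M f (\<lambda>x. - D g x)"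
      using assms(2) f g unfolding symop_def by simp
  qed
qed

lemma nrm_neg: "f \<in> L2 M \<Longrightarrow> nrm M (\<lambda>x. - f x) = nrm M f"
  using nrm_scale[of f M "-1"] by simp

lemma spec_top:
  assumes D: "lin0 M D" "bnd M D C" "symop M D"
    and neg: "\<And>f. f \<in> L2_0 M \<Longrightarrow> ip M (D f) f \<le> 0"
    and approx: "\<And>e. e > 0 \<Longrightarrow> \<exists>f\<in>L2_0 M. nrm M f = 1 \<and> - e \<le> ip M (D f) f"
  shows "\<not> bij0 M D"
proof
  assume bij: "bij0 M D"
  have inj: "\<And>f. f \<in> L2_0 M \<Longrightarrow> (AE x in M. D f x = 0) \<Longrightarrow> (AE x in M. f x = 0)"
    using bij unfolding bij0_def by blast
  have sur: "\<exists>f. f \<in> L2_0 M \<and> (AE x in M. D f x = g x)" if "g \<in> L2_0 M" for g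
  proof -
    have "\<forall>g\<in>L2_0 M. \<exists>f\<in>L2_0 M. AE x in M. D f x = g x" using bij unfolding bij0_def by (rule conjunct2)
    then have "\<exists>f\<in>L2_0 M. AE x in M. D f x = g x" using that by (rule bspec)
    then show ?thesis by (simp only: Bex_def)
  qed
  define S where "S g = (SOME f. f \<in> L2_0 M \<and> (AE x in M. D f x = g x))" for g
  have SP: "S g \<in> L2_0 M \<and> (AE x in M. D (S g) x = g x)" if "g \<in> L2_0 M" for g
    unfolding S_def by (rule someI_ex[OF sur[OF that]])
  have injd: "AE x in M. f x = h x" if f: "f \<in> L2_0 M" and h: "h \<in> L2_0 M" and e: "AE x in M. D f x = D h x" for f h
  proof -
    have d: "(\<lambda>x. 1 * f x + (-1) * h x) \<in> L2_0 M" using L2_0_lin[OF f h] .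
    have "AE x in M. D (\<lambda>x. 1 * f x + (-1) * h x) x = 1 * D f x + (-1) * D h x"
      by (rule lin0_comb[OF D(1) f h])
    with e have "AE x in M. D (\<lambda>x. 1 * f x + (-1) * h x) x = 0" by eventually_elim simp
    then have "AE x in M. 1 * f x + (-1) * h x = 0" by (rule inj[OF d])
    then show ?thesis by eventually_elim simp
  qed
  have Slin: "lin0 M S" unfolding lin0_def
  proof (intro conjI ballI allI)
    fix g assume "g \<in> L2_0 M" then show "S g \<in> L2_0 M" using SP by blast
  next
    fix f g a b assume f: "f \<in> L2_0 M" and g: "g \<in> L2_0 M"
    have c: "(\<lambda>x. a * f x + b * g x) \<in> L2_0 M" using L2_0_lin[OF f g] .
    have Sf: "S f \<in> L2_0 M" and Sg: "S g \<in> L2_0 M" using SP f g by auto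
    have c2: "(\<lambda>x. a * S f x + b * S g x) \<in> L2_0 M" using L2_0_lin[OF Sf Sg] .
    show "AE x in M. S (\<lambda>x. a * f x + b * g x) x = a * S f x + b * S g x"
    proof (rule injd[OF conjunct1[OF SP[OF c]] c2])
      have "AE x in M. D (\<lambda>x. a * S f x + b * S g x) x = a * D (S f) x + b * D (S g) x"
        by (rule lin0_comb[OF D(1) Sf Sg])
      with conjunct2[OF SP[OF c]] conjunct2[OF SP[OF f]] conjunct2[OF SP[OF g]]
      show "AE x in M. D (S (\<lambda>x. a * f x + b * g x)) x = D (\<lambda>x. a * S f x + b * S g x) x"
        by eventually_elim simp
    qed
  qed
  have Ssym: "symop M S" unfolding symop_def
  proof (intro ballI)
    fix f g assume f: "f \<in> L2_0 M" and g: "g \<in> L2_0 M"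
    have Sf: "S f \<in> L2_0 M" and Sg: "S g \<in> L2_0 M" using SP f g by auto
    have "ip M (S f) g = ip M (S f) (D (S g))"
      using conjunct2[OF SP[OF g]] Sf g lin0_in[OF D(1) Sg] by (intro ip_cong_meas) (auto simp: L2_0_meas)
    also have "\<dots> = ip M (D (S f)) (S g)" using D(3) Sf Sg unfolding symop_def by simp
    also have "\<dots> = ip M f (S g)"
      using conjunct2[OF SP[OF f]] f Sg lin0_in[OF D(1) Sf] by (intro ip_cong_meas) (auto simp: L2_0_meas)
    finally show "ip M (S f) g = ip M f (S g)" .
  qed
  have Sz: "AE x in M. S g x = 0" if g: "g \<in> L2_0 M" and z: "AE x in M. g x = 0" for g
  proof -
    have "AE x in M. D (S g) x = 0" using conjunct2[OF SP[OF g]] z by eventually_elim simp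
    then show ?thesis using inj SP g by blast
  qed
  obtain C' where C': "\<And>g. g \<in> L2_0 M \<Longrightarrow> nrm M (S g) \<le> C' * nrm M g"
    using ub_symmetric[OF Slin Ssym Sz] by blast
  define Cp where "Cp = \<bar>C\<bar>"
  have Cp: "0 \<le> Cp" unfolding Cp_def by simp
  have bndD: "nrm M (D f) \<le> Cp * nrm M f" if "f \<in> L2_0 M" for f
  proof -
    have "nrm M (D f) \<le> C * nrm M f" using D(2) that unfolding bnd_def by auto
    also have "\<dots> \<le> Cp * nrm M f" unfolding Cp_def by (intro mult_right_mono) (auto simp: nrm_nonneg)
    finally show ?thesis .
  qed
  define A where "A = (\<lambda>f x. - D f x)"
  have Alin: "lin0 M A" unfolding A_def by (rule lin0_neg[OF D(1)])
  have Asym: "symop M A" unfolding A_def by (rule symop_neg[OF D(1,3)])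
  have Apos: "0 \<le> ip M (A u) u" if "u \<in> L2_0 M" for u
  proof -
    have "ip M (\<lambda>x. (-1) * D u x + 0 * D u x) u = - ip M (D u) u"
      using lin0_in[OF D(1) that] that by (subst ip_lin_left) (auto simp: L2_0_L2)
    then show ?thesis using neg[OF that] unfolding A_def by simp
  qed
  have nA: "nrm M (A u) = nrm M (D u)" if "u \<in> L2_0 M" for u
    unfolding A_def using lin0_in[OF D(1) that] by (intro nrm_neg) (simp add: L2_0_L2)
  define C2 where "C2 = C'\<^sup>2 * Cp"
  have C2: "0 \<le> C2" unfolding C2_def using Cp by simp
  define e where "e = 1 / (C2 + 1)"
  have ep: "e > 0" unfolding e_def using C2 by simp
  obtain f where f: "f \<in> L2_0 M" "nrm M f = 1" "- e \<le> ip M (D f) f" using approx[OF ep] by blast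
  have Af: "A f \<in> L2_0 M" using lin0_in[OF Alin f(1)] .
  have ipAf: "ip M (A f) f \<le> e"
  proof -
    have "ip M (\<lambda>x. (-1) * D f x + 0 * D f x) f = - ip M (D f) f"
      using lin0_in[OF D(1) f(1)] f(1) by (subst ip_lin_left) (auto simp: L2_0_L2)
    then show ?thesis using f(3) unfolding A_def by simp
  qed
  define n where "n = nrm M (A f)"
  have n0: "0 \<le> n" unfolding n_def by (rule nrm_nonneg)
  have nsq: "n\<^sup>2 \<le> e * Cp"
  proof -
    have "(ip M (A f) (A f))\<^sup>2 \<le> ip M (A f) f * ip M (A (A f)) (A f)"
      by (rule psd_CS[OF Alin Asym Apos f(1) Af])
    moreover have "ip M (A f) (A f) = n\<^sup>2" unfolding n_def by (simp add: nrm_sq)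
    moreover have "ip M (A (A f)) (A f) \<le> Cp * n\<^sup>2"
    proof -
      have "ip M (A (A f)) (A f) \<le> \<bar>ip M (A (A f)) (A f)\<bar>" by simp
      also have "\<dots> \<le> nrm M (A (A f)) * nrm M (A f)"
        using lin0_in[OF Alin Af] Af by (intro CS) (auto simp: L2_0_L2)
      also have "\<dots> \<le> (Cp * nrm M (A f)) * nrm M (A f)"
        using bndD[OF Af] nA[OF Af] by (intro mult_right_mono) (auto simp: nrm_nonneg)
      finally show ?thesis unfolding n_def by (simp add: power2_eq_square)
    qed
    moreover have "0 \<le> ip M (A (A f)) (A f)" by (rule Apos[OF Af])
    ultimately have "(n\<^sup>2)\<^sup>2 \<le> e * (Cp * n\<^sup>2)"
      using ipAf Apos[OF f(1)] by (smt (verit) mult_mono)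
    then have ineq: "n\<^sup>2 * n\<^sup>2 \<le> (e * Cp) * n\<^sup>2" by (simp add: power2_eq_square algebra_simps)
    show ?thesis
    proof (cases "n = 0")
      case True then show ?thesis using ep Cp by simp
    next
      case False then have "0 < n\<^sup>2" by simp
      then show ?thesis using mult_right_le_imp_le[OF ineq] by simp
    qed
  qed
  have "AE x in M. D (S (D f)) x = D f x" using conjunct2[OF SP[OF lin0_in[OF D(1) f(1)]]] .
  then have "AE x in M. S (D f) x = f x"
    by (rule injd[OF conjunct1[OF SP[OF lin0_in[OF D(1) f(1)]]] f(1)])
  then have "nrm M f = nrm M (S (D f))"
    using f(1) conjunct1[OF SP[OF lin0_in[OF D(1) f(1)]]] by (intro nrm_cong) (auto simp: L2_0_meas)
  also have "\<dots> \<le> C' * nrm M (D f)" by (rule C'[OF lin0_in[OF D(1) f(1)]])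
  also have "nrm M (D f) = n" unfolding n_def using nA[OF f(1)] by simp
  finally have "1 \<le> C' * n" using f(2) by simp
  then have "1 \<le> (C' * n)\<^sup>2" by (metis le_less_trans less_le not_less one_le_power power2_eq_square zero_le_one)
  also have "\<dots> = C'\<^sup>2 * n\<^sup>2" by (simp add: power_mult_distrib)
  also have "\<dots> \<le> C'\<^sup>2 * (e * Cp)" using nsq by (intro mult_left_mono) auto
  also have "\<dots> = C2 / (C2 + 1)" unfolding C2_def e_def by simp
  also have "\<dots> < 1" using C2 by simp
  finally show False by simp
qed

end

locale rkern = prob_space M for M :: "'a measure" +
  fixes K :: "'a \<Rightarrow> 'a measure"
  assumes kern: "K \<in> M \<rightarrow>\<^sub>M prob_algebra M"
    and rev: "reversible M K"
begin

lemma Ksub[measurable]: "K \<in> M \<rightarrow>\<^sub>M subprob_algebra M"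
  using kern by (rule measurable_prob_algebraD)

lemma Kx: "x \<in> space M \<Longrightarrow> prob_space (K x) \<and> sets (K x) = sets M"
  using measurable_space[OF kern] by (simp add: space_prob_algebra)

lemma Kspace: "x \<in> space M \<Longrightarrow> space (K x) = space M"
  using Kx sets_eq_imp_space_eq by blast

lemma Kmeas: "x \<in> space M \<Longrightarrow> f \<in> borel_measurable M \<Longrightarrow> f \<in> borel_measurable (K x)"
  using Kx measurable_cong_sets by blast

lemma Kint_meas: "v \<in> borel_measurable M \<Longrightarrow> (\<lambda>x. \<integral>\<^sup>+y. v y \<partial>K x) \<in> borel_measurable M"
  by (rule measurable_compose[OF Ksub nn_integral_measurable_subprob_algebra])

lemma Kem_meas: "B \<in> sets M \<Longrightarrow> (\<lambda>x. emeasure (K x) B) \<in> borel_measurable M"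
  by (rule measurable_emeasure_kernel[OF Ksub])

lemma inv_set:
  assumes B: "B \<in> sets M"
  shows "(\<integral>\<^sup>+x. emeasure (K x) B \<partial>M) = emeasure M B"
proof -
  have "(\<integral>\<^sup>+x. indicator (space M) x * emeasure (K x) B \<partial>M) = (\<integral>\<^sup>+x. indicator B x * emeasure (K x) (space M) \<partial>M)"
    using rev B unfolding reversible_def by auto
  moreover have "(\<integral>\<^sup>+x. indicator (space M) x * emeasure (K x) B \<partial>M) = (\<integral>\<^sup>+x. emeasure (K x) B \<partial>M)"
    by (intro nn_integral_cong) simp
  moreover have "(\<integral>\<^sup>+x. indicator B x * emeasure (K x) (space M) \<partial>M) = (\<integral>\<^sup>+x. indicator B x \<partial>M)"
  proof (intro nn_integral_cong)
    fix x assume x: "x \<in> space M"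
    then have "emeasure (K x) (space M) = 1" using Kx[OF x] Kspace[OF x] prob_space.emeasure_space_1 by metis
    then show "indicator B x * emeasure (K x) (space M) = indicator B x" by simp
  qed
  ultimately show ?thesis using B by simp
qed

lemma bindK: "M \<bind> K = M"
proof (rule measure_eqI)
  show sb: "sets (M \<bind> K) = sets M" using Kx not_empty by (intro sets_bind) auto
  fix B assume "B \<in> sets (M \<bind> K)"
  then have B: "B \<in> sets M" using sb by simp
  show "emeasure (M \<bind> K) B = emeasure M B"
    using emeasure_bind[OF not_empty Ksub B] inv_set[OF B] by simp
qed

lemma inv_nn:
  assumes h: "h \<in> borel_measurable M"
  shows "(\<integral>\<^sup>+x. (\<integral>\<^sup>+y. h y \<partial>K x) \<partial>M) = (\<integral>\<^sup>+x. h x \<partial>M)"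
  using nn_integral_bind[OF h Ksub] bindK by simp

definition Phi :: "('a \<Rightarrow> ennreal) \<Rightarrow> ('a \<Rightarrow> ennreal) \<Rightarrow> ennreal" where
  "Phi u v = (\<integral>\<^sup>+x. u x * (\<integral>\<^sup>+y. v y \<partial>K x) \<partial>M)"

lemma Phi_ind:
  assumes A: "A \<in> sets M" and B: "B \<in> sets M"
  shows "Phi (indicator A) (indicator B) = Phi (indicator B) (indicator A)"
proof -
  have "Phi (indicator A) (indicator B) = (\<integral>\<^sup>+x. indicator A x * emeasure (K x) B \<partial>M)"
    unfolding Phi_def using B Kx by (intro nn_integral_cong) auto
  also have "\<dots> = (\<integral>\<^sup>+x. indicator B x * emeasure (K x) A \<partial>M)" using rev A B unfolding reversible_def by auto
  also have "\<dots> = Phi (indicator B) (indicator A)"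
    unfolding Phi_def using A Kx by (intro nn_integral_cong) auto
  finally show ?thesis .
qed

lemma Phi_ext:
  assumes v: "v \<in> borel_measurable M" and hyp: "\<And>A. A \<in> sets M \<Longrightarrow> Phi (indicator A) v = Phi v (indicator A)"
    and u: "u \<in> borel_measurable M"
  shows "Phi u v = Phi v u"
  using u
proof (induct rule: borel_measurable_induct)
  case (cong f g)
  have "Phi f v = Phi g v" unfolding Phi_def using cong by (intro nn_integral_cong) auto
  moreover have "Phi v f = Phi v g" unfolding Phi_def using cong Kspace
    by (intro nn_integral_cong arg_cong2[where f="(*)"] refl) auto
  ultimately show ?case using cong by simp
next
  case (set A) then show ?case by (rule hyp)
next
  case (mult u c)
  have "Phi (\<lambda>x. c * u x) v = c * Phi u v" unfolding Phi_def
    using u mult Kint_meas[OF v] by (subst nn_integral_cmult[symmetric]) (auto simp: mult.assoc)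
  moreover have "Phi v (\<lambda>x. c * u x) = c * Phi v u"
  proof -
    have "Phi v (\<lambda>x. c * u x) = (\<integral>\<^sup>+x. c * (v x * (\<integral>\<^sup>+y. u y \<partial>K x)) \<partial>M)"
      unfolding Phi_def using mult Kmeas
      by (intro nn_integral_cong) (auto simp: nn_integral_cmult mult.left_commute)
    also have "\<dots> = c * Phi v u" unfolding Phi_def using mult Kint_meas v by (intro nn_integral_cmult) auto
    finally show ?thesis .
  qed
  ultimately show ?case using mult by simp
next
  case (add u w)
  have "Phi (\<lambda>x. w x + u x) v = Phi w v + Phi u v" unfolding Phi_def
    using add Kint_meas[OF v] by (subst nn_integral_add[symmetric]) (auto simp: distrib_right)
  moreover have "Phi v (\<lambda>x. w x + u x) = Phi v w + Phi v u"
  proof -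
    have "Phi v (\<lambda>x. w x + u x) = (\<integral>\<^sup>+x. v x * (\<integral>\<^sup>+y. w y \<partial>K x) + v x * (\<integral>\<^sup>+y. u y \<partial>K x) \<partial>M)"
      unfolding Phi_def using add Kmeas
      by (intro nn_integral_cong) (auto simp: nn_integral_add distrib_left)
    also have "\<dots> = Phi v w + Phi v u" unfolding Phi_def using add Kint_meas v by (intro nn_integral_add) auto
    finally show ?thesis .
  qed
  ultimately show ?case using add by simp
next
  case (seq U)
  have wm: "(\<lambda>x. \<integral>\<^sup>+y. v y \<partial>K x) \<in> borel_measurable M" by (rule Kint_meas[OF v])
  have "Phi (SUP i. U i) v = (\<integral>\<^sup>+x. (SUP i. U i x * (\<integral>\<^sup>+y. v y \<partial>K x)) \<partial>M)"
    unfolding Phi_def SUP_apply by (simp add: SUP_mult_right_ennreal image_comp)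
  also have "\<dots> = (SUP i. Phi (U i) v)" unfolding Phi_def
  proof (rule nn_integral_monotone_convergence_SUP)
    show "incseq (\<lambda>i x. U i x * (\<integral>\<^sup>+y. v y \<partial>K x))"
      using seq(4) unfolding incseq_def le_fun_def by (auto intro!: mult_right_mono)
    show "(\<lambda>x. U i x * (\<integral>\<^sup>+y. v y \<partial>K x)) \<in> borel_measurable M" for i
      using seq(1) wm by measurable
  qed
  finally have 1: "Phi (SUP i. U i) v = (SUP i. Phi (U i) v)" .
  have inner: "(\<integral>\<^sup>+y. (SUP i. U i) y \<partial>K x) = (SUP i. \<integral>\<^sup>+y. U i y \<partial>K x)" if x: "x \<in> space M" for x
    unfolding SUP_apply
  proof (rule nn_integral_monotone_convergence_SUP)
    show "incseq U" by (rule seq(4))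
    show "U i \<in> borel_measurable (K x)" for i using Kmeas[OF x seq(1)] .
  qed
  have "Phi v (SUP i. U i) = (\<integral>\<^sup>+x. (SUP i. v x * (\<integral>\<^sup>+y. U i y \<partial>K x)) \<partial>M)"
    unfolding Phi_def
  proof (intro nn_integral_cong)
    fix x assume x: "x \<in> space M"
    show "v x * (\<integral>\<^sup>+y. (SUP i. U i) y \<partial>K x) = (SUP i. v x * (\<integral>\<^sup>+y. U i y \<partial>K x))"
      unfolding inner[OF x] by (simp add: SUP_mult_left_ennreal image_comp)
  qed
  also have "\<dots> = (SUP i. Phi v (U i))" unfolding Phi_def
  proof (rule nn_integral_monotone_convergence_SUP)
    show "incseq (\<lambda>i x. v x * (\<integral>\<^sup>+y. U i y \<partial>K x))"
      using seq unfolding incseq_def le_fun_def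
      by (auto intro!: mult_left_mono nn_integral_mono)
    show "(\<lambda>x. v x * (\<integral>\<^sup>+y. U i y \<partial>K x)) \<in> borel_measurable M" for i
      using seq v Kint_meas[of "U i"] by auto
  qed
  finally have 2: "Phi v (SUP i. U i) = (SUP i. Phi v (U i))" .
  have ih: "Phi (U i) v = Phi v (U i)" for i using seq(3) .
  show ?case unfolding 1 2 using ih by simp
qed

lemma Phi_sym:
  assumes "u \<in> borel_measurable M" "v \<in> borel_measurable M"
  shows "Phi u v = Phi v u"
proof -
  have s1: "Phi w (indicator B) = Phi (indicator B) w" if B: "B \<in> sets M" and w: "w \<in> borel_measurable M" for B w
  proof (rule Phi_ext)
    show "indicator B \<in> borel_measurable M" using B by simp
    show "Phi (indicator A) (indicator B) = Phi (indicator B) (indicator A)" if "A \<in> sets M" for A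
      by (rule Phi_ind[OF that B])
  qed (rule w)
  show ?thesis
  proof (rule Phi_ext)
    show "Phi (indicator A) v = Phi v (indicator A)" if "A \<in> sets M" for A
      using s1[OF that assms(2)] by (rule sym)
  qed (use assms in auto)
qed

end

lemma (in prob_space) sq_int_le:
  fixes f :: "'a \<Rightarrow> real"
  assumes f: "integrable M f" and f2: "integrable M (\<lambda>x. (f x)\<^sup>2)"
  shows "(\<integral>x. f x \<partial>M)\<^sup>2 \<le> (\<integral>x. (f x)\<^sup>2 \<partial>M)"
proof -
  define c where "c = (\<integral>x. f x \<partial>M)"
  have "0 \<le> (\<integral>x. (f x - c)\<^sup>2 \<partial>M)" by (intro Bochner_Integration.integral_nonneg_AE) simp
  also have "(\<integral>x. (f x - c)\<^sup>2 \<partial>M) = (\<integral>x. (f x)\<^sup>2 - (2 * c) * f x + c\<^sup>2 \<partial>M)"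
    by (simp add: power2_eq_square algebra_simps)
  also have "\<dots> = (\<integral>x. (f x)\<^sup>2 \<partial>M) - (2 * c) * c + c\<^sup>2"
    using f f2 by (simp add: prob_space c_def)
  finally show ?thesis unfolding c_def by (simp add: power2_eq_square)
qed

context rkern
begin

lemma kop_meas: "f \<in> borel_measurable M \<Longrightarrow> kop K f \<in> borel_measurable M"
  unfolding kop_def by (rule measurable_compose[OF Ksub integral_measurable_subprob_algebra])

lemma L2_Kint:
  assumes f: "f \<in> L2 M"
  shows "AE x in M. integrable (K x) (\<lambda>y. (f y)\<^sup>2) \<and> integrable (K x) f"
proof -
  have fm: "f \<in> borel_measurable M" using f unfolding L2_def by auto
  have "(\<integral>\<^sup>+x. (\<integral>\<^sup>+y. ennreal ((f y)\<^sup>2) \<partial>K x) \<partial>M) = (\<integral>\<^sup>+x. ennreal ((f x)\<^sup>2) \<partial>M)"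
    using fm by (intro inv_nn) auto
  also have "\<dots> = ennreal ((nrm M f)\<^sup>2)" by (rule L2_nn[OF f])
  finally have "(\<integral>\<^sup>+x. (\<integral>\<^sup>+y. ennreal ((f y)\<^sup>2) \<partial>K x) \<partial>M) \<noteq> \<infinity>" by simp
  then have "AE x in M. (\<integral>\<^sup>+y. ennreal ((f y)\<^sup>2) \<partial>K x) \<noteq> \<infinity>"
    using fm by (intro nn_integral_PInf_AE Kint_meas) auto
  with AE_space show ?thesis
  proof eventually_elim
    case (elim x)
    then have x: "x \<in> space M" and fin: "(\<integral>\<^sup>+y. ennreal ((f y)\<^sup>2) \<partial>K x) \<noteq> \<infinity>" by auto
    have fmx: "f \<in> borel_measurable (K x)" using Kmeas[OF x fm] .
    have i2: "integrable (K x) (\<lambda>y. (f y)\<^sup>2)"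
      using fmx fin by (intro integrableI_bounded) (auto simp: top.not_eq_extremum)
    interpret Kx: prob_space "K x" using Kx[OF x] by simp
    have "f \<in> L2 (K x)" using fmx i2 unfolding L2_def by auto
    then have "integrable (K x) f" by (rule Kx.L2_int)
    then show ?case using i2 by simp
  qed
qed

end

definition pp :: "('a \<Rightarrow> real) \<Rightarrow> 'a \<Rightarrow> real" where "pp f = (\<lambda>x. (1/2) * f x + (1/2) * \<bar>f x\<bar>)"
definition nn :: "('a \<Rightarrow> real) \<Rightarrow> 'a \<Rightarrow> real" where "nn f = (\<lambda>x. (-1/2) * f x + (1/2) * \<bar>f x\<bar>)"

context rkern
begin

lemma kop_L2:
  assumes f: "f \<in> L2 M"
  shows "kop K f \<in> L2 M" "nrm M (kop K f) \<le> nrm M f"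
proof -
  have fm: "f \<in> borel_measurable M" using f unfolding L2_def by auto
  have km: "kop K f \<in> borel_measurable M" by (rule kop_meas[OF fm])
  have "AE x in M. ennreal ((kop K f x)\<^sup>2) \<le> (\<integral>\<^sup>+y. ennreal ((f y)\<^sup>2) \<partial>K x)"
    using L2_Kint[OF f] AE_space
  proof eventually_elim
    case (elim x)
    interpret Kx: prob_space "K x" using Kx[of x] elim by simp
    have "(kop K f x)\<^sup>2 \<le> (\<integral>y. (f y)\<^sup>2 \<partial>K x)"
      unfolding kop_def using elim by (intro Kx.sq_int_le) auto
    moreover have "(\<integral>\<^sup>+y. ennreal ((f y)\<^sup>2) \<partial>K x) = ennreal (\<integral>y. (f y)\<^sup>2 \<partial>K x)"
      using elim by (intro nn_integral_eq_integral) auto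
    ultimately show ?case by (simp add: ennreal_leI)
  qed
  then have "(\<integral>\<^sup>+x. ennreal ((kop K f x)\<^sup>2) \<partial>M) \<le> (\<integral>\<^sup>+x. (\<integral>\<^sup>+y. ennreal ((f y)\<^sup>2) \<partial>K x) \<partial>M)"
    by (rule nn_integral_mono_AE)
  also have "\<dots> = (\<integral>\<^sup>+x. ennreal ((f x)\<^sup>2) \<partial>M)" using fm by (intro inv_nn) auto
  also have "\<dots> = ennreal ((nrm M f)\<^sup>2)" by (rule L2_nn[OF f])
  finally have I: "(\<integral>\<^sup>+x. ennreal ((kop K f x)\<^sup>2) \<partial>M) \<le> ennreal ((nrm M f)\<^sup>2)" .
  show "kop K f \<in> L2 M" using L2_of_nn(1)[OF km I] by simp
  have "(nrm M (kop K f))\<^sup>2 \<le> (nrm M f)\<^sup>2" using L2_of_nn(2)[OF km I] by simp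
  then show "nrm M (kop K f) \<le> nrm M f" by (rule power2_le_imp_le) (rule nrm_nonneg)
qed

lemma kop_lin:
  assumes f: "f \<in> L2 M" and g: "g \<in> L2 M"
  shows "AE x in M. kop K (\<lambda>y. a * f y + b * g y) x = a * kop K f x + b * kop K g x"
  using L2_Kint[OF f] L2_Kint[OF g]
proof eventually_elim
  case (elim x)
  then show ?case unfolding kop_def by simp
qed

lemma kop_nonneg: "(\<And>y. 0 \<le> p y) \<Longrightarrow> 0 \<le> kop K p x"
  unfolding kop_def by (intro Bochner_Integration.integral_nonneg) auto

lemma kop_J:
  assumes p: "p \<in> L2 M" and q: "q \<in> L2 M" and p0: "\<And>y. 0 \<le> p y" and q0: "\<And>y. 0 \<le> q y"
  shows "Phi (\<lambda>x. ennreal (q x)) (\<lambda>y. ennreal (p y)) = ennreal (ip M (kop K p) q)"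
proof -
  have pm: "p \<in> borel_measurable M" and qm: "q \<in> borel_measurable M" using p q unfolding L2_def by auto
  have "Phi (\<lambda>x. ennreal (q x)) (\<lambda>y. ennreal (p y)) = (\<integral>\<^sup>+x. ennreal (kop K p x * q x) \<partial>M)"
    unfolding Phi_def
  proof (rule nn_integral_cong_AE)
    show "AE x in M. ennreal (q x) * (\<integral>\<^sup>+y. ennreal (p y) \<partial>K x) = ennreal (kop K p x * q x)"
      using L2_Kint[OF p] AE_space
    proof eventually_elim
      case (elim x)
      have "(\<integral>\<^sup>+y. ennreal (p y) \<partial>K x) = ennreal (kop K p x)"
        unfolding kop_def using elim p0 by (intro nn_integral_eq_integral) auto
      then show ?case using q0[of x] kop_nonneg[of p x, OF p0] by (simp add: ennreal_mult mult.commute)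
    qed
  qed
  also have "\<dots> = ennreal (ip M (kop K p) q)" unfolding ip_def
    using L2_mult_int[OF kop_L2(1)[OF p] q] q0 kop_nonneg[OF p0]
    by (intro nn_integral_eq_integral) auto
  finally show ?thesis .
qed

lemma kop_T_sym:
  assumes p: "p \<in> L2 M" and q: "q \<in> L2 M" and p0: "\<And>y. 0 \<le> p y" and q0: "\<And>y. 0 \<le> q y"
  shows "ip M (kop K p) q = ip M (kop K q) p"
proof -
  have pm: "p \<in> borel_measurable M" and qm: "q \<in> borel_measurable M" using p q unfolding L2_def by auto
  have "ennreal (ip M (kop K p) q) = ennreal (ip M (kop K q) p)"
    using kop_J[OF p q p0 q0] kop_J[OF q p q0 p0] Phi_sym[of "\<lambda>x. ennreal (q x)" "\<lambda>x. ennreal (p x)"] pm qm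
    by simp
  moreover have "0 \<le> ip M (kop K p) q" "0 \<le> ip M (kop K q) p" unfolding ip_def
    using kop_nonneg[OF p0] kop_nonneg[OF q0] p0 q0 by (auto intro!: Bochner_Integration.integral_nonneg)
  ultimately show ?thesis by simp
qed


lemma pp_nn:
  assumes f: "f \<in> L2 M"
  shows "pp f \<in> L2 M" "nn f \<in> L2 M" "\<And>y. 0 \<le> pp f y" "\<And>y. 0 \<le> nn f y"
    "f = (\<lambda>x. 1 * pp f x + (-1) * nn f x)"
proof -
  show "pp f \<in> L2 M" unfolding pp_def by (rule L2_lin[OF f L2_abs(1)[OF f]])
  show "nn f \<in> L2 M" unfolding nn_def by (rule L2_lin[OF f L2_abs(1)[OF f]])
  show "\<And>y. 0 \<le> pp f y" "\<And>y. 0 \<le> nn f y" unfolding pp_def nn_def by (auto simp: abs_if)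
  show "f = (\<lambda>x. 1 * pp f x + (-1) * nn f x)" unfolding pp_def nn_def by (auto simp: fun_eq_iff)
qed

lemma kop_expand:
  assumes f: "f \<in> L2 M" and g: "g \<in> L2 M"
  shows "ip M (kop K f) g = ip M (kop K (pp f)) (pp g) - ip M (kop K (pp f)) (nn g)
     - ip M (kop K (nn f)) (pp g) + ip M (kop K (nn f)) (nn g)"
proof -
  note F = pp_nn[OF f] and G = pp_nn[OF g]
  have KF: "kop K (pp f) \<in> L2 M" "kop K (nn f) \<in> L2 M" using kop_L2(1) F by auto
  have "AE x in M. kop K f x = 1 * kop K (pp f) x + (-1) * kop K (nn f) x"
    using kop_lin[OF F(1,2), of 1 "-1"] F(5) by simp
  then have "ip M (kop K f) g = ip M (\<lambda>x. 1 * kop K (pp f) x + (-1) * kop K (nn f) x) g"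
    using kop_L2(1)[OF f] L2_lin[OF KF, of 1 "-1"] g by (intro ip_cong_meas) (auto simp: L2_def)
  also have "\<dots> = ip M (kop K (pp f)) g - ip M (kop K (nn f)) g"
    using ip_lin_left[OF KF g, of 1 "-1"] by simp
  also have "ip M (kop K (pp f)) g = ip M (kop K (pp f)) (pp g) - ip M (kop K (pp f)) (nn g)"
    using KF G ip_lin_right[OF G(1,2) KF(1), of 1 "-1"] by (subst G(5)) simp
  also have "ip M (kop K (nn f)) g = ip M (kop K (nn f)) (pp g) - ip M (kop K (nn f)) (nn g)"
    using KF G ip_lin_right[OF G(1,2) KF(2), of 1 "-1"] by (subst G(5)) simp
  finally show ?thesis by simp
qed

lemma kop_sym:
  assumes f: "f \<in> L2 M" and g: "g \<in> L2 M"
  shows "ip M (kop K f) g = ip M f (kop K g)"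
proof -
  note F = pp_nn[OF f] and G = pp_nn[OF g]
  have "ip M f (kop K g) = ip M (kop K g) f" by (rule ip_sym)
  also have "\<dots> = ip M (kop K (pp g)) (pp f) - ip M (kop K (pp g)) (nn f)
     - ip M (kop K (nn g)) (pp f) + ip M (kop K (nn g)) (nn f)" by (rule kop_expand[OF g f])
  also have "\<dots> = ip M (kop K (pp f)) (pp g) - ip M (kop K (pp f)) (nn g)
     - ip M (kop K (nn f)) (pp g) + ip M (kop K (nn f)) (nn g)"
  proof -
    have "ip M (kop K (pp g)) (pp f) = ip M (kop K (pp f)) (pp g)" by (rule kop_T_sym[OF G(1) F(1) G(3) F(3)])
    moreover have "ip M (kop K (pp g)) (nn f) = ip M (kop K (nn f)) (pp g)" by (rule kop_T_sym[OF G(1) F(2) G(3) F(4)])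
    moreover have "ip M (kop K (nn g)) (pp f) = ip M (kop K (pp f)) (nn g)" by (rule kop_T_sym[OF G(2) F(1) G(4) F(3)])
    moreover have "ip M (kop K (nn g)) (nn f) = ip M (kop K (nn f)) (nn g)" by (rule kop_T_sym[OF G(2) F(2) G(4) F(4)])
    ultimately show ?thesis by simp
  qed
  also have "\<dots> = ip M (kop K f) g" by (rule kop_expand[OF f g, symmetric])
  finally show ?thesis by simp
qed

lemma kop_mean:
  assumes f: "f \<in> L2 M"
  shows "(\<integral>x. kop K f x \<partial>M) = (\<integral>x. f x \<partial>M)"
proof -
  have one: "(\<lambda>x. 1) \<in> L2 M" unfolding L2_def by auto
  have k1: "AE x in M. kop K (\<lambda>x. 1) x = 1"
    using AE_space
  proof eventually_elim
    case (elim x)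
    interpret Kx: prob_space "K x" using Kx[of x] elim by simp
    show ?case unfolding kop_def by (simp add: Kx.prob_space)
  qed
  have "(\<integral>x. kop K f x \<partial>M) = ip M (kop K f) (\<lambda>x. 1)" unfolding ip_def by simp
  also have "\<dots> = ip M f (kop K (\<lambda>x. 1))" by (rule kop_sym[OF f one])
  also have "\<dots> = ip M f (\<lambda>x. 1)"
    using k1 f kop_meas[of "\<lambda>x. 1"] by (intro ip_cong_meas) (auto simp: L2_def)
  also have "\<dots> = (\<integral>x. f x \<partial>M)" unfolding ip_def by simp
  finally show ?thesis .
qed

lemma kop_lin0: "lin0 M (kop K)"
  unfolding lin0_def
proof (intro conjI ballI allI)
  fix f assume f: "f \<in> L2_0 M"
  then have fL: "f \<in> L2 M" by (rule L2_0_L2)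
  show "kop K f \<in> L2_0 M" using kop_L2(1)[OF fL] kop_mean[OF fL] f unfolding L2_0_def L2_def by auto
next
  fix f g a b assume "f \<in> L2_0 M" "g \<in> L2_0 M"
  then show "AE x in M. kop K (\<lambda>x. a * f x + b * g x) x = a * kop K f x + b * kop K g x"
    by (intro kop_lin) (auto simp: L2_0_L2)
qed

lemma kop_bnd: "bnd M (kop K) 1"
  unfolding bnd_def using kop_L2(2) by (auto simp: L2_0_L2)

lemma kop_symop: "symop M (kop K)"
  unfolding symop_def using kop_sym by (auto simp: L2_0_L2)

end

locale mixset = prob_space M for M :: "'a measure" +
  fixes K :: "nat \<Rightarrow> 'a \<Rightarrow> 'a measure" and a :: "nat \<Rightarrow> real"
  assumes kern: "\<And>i. K i \<in> M \<rightarrow>\<^sub>M prob_algebra M"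
    and rev: "\<And>i. reversible M (K i)"
    and a0: "\<And>i. 0 \<le> a i"
    and asum: "a sums 1"
begin

lemma rk: "rkern M (K i)"
  by (rule rkern.intro[OF prob_space_axioms]) (unfold_locales, auto intro: kern rev)

definition NN :: "nat measure" where "NN = density (count_space UNIV) (\<lambda>i. ennreal (a i))"

lemma NN_meas: "x \<in> space M \<Longrightarrow> (\<lambda>i. K i x) \<in> NN \<rightarrow>\<^sub>M subprob_algebra M"
proof -
  assume x: "x \<in> space M"
  have "(\<lambda>i. K i x) \<in> count_space UNIV \<rightarrow>\<^sub>M subprob_algebra M"
    using measurable_space[OF rkern.Ksub[OF rk] x] by auto
  then show ?thesis unfolding NN_def by (simp add: measurable_cong_sets)
qed

lemma NN_int: "(\<integral>\<^sup>+i. f i \<partial>NN) = (\<Sum>i. ennreal (a i) * f i)"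
  unfolding NN_def by (simp add: nn_integral_density nn_integral_count_space_nat)

lemma mix_bind:
  assumes x: "x \<in> space M"
  shows "mixture M a K x = NN \<bind> (\<lambda>i. K i x)"
proof -
  have ne: "space NN \<noteq> {}" unfolding NN_def by simp
  have sb: "sets (NN \<bind> (\<lambda>i. K i x)) = sets M"
    using ne rkern.Kx[OF rk x] by (intro sets_bind) auto
  have spb: "space (NN \<bind> (\<lambda>i. K i x)) = space M" using sets_eq_imp_space_eq[OF sb] .
  have em: "emeasure (NN \<bind> (\<lambda>i. K i x)) B = (\<Sum>i. ennreal (a i) * emeasure (K i x) B)" if B: "B \<in> sets M" for B
    using emeasure_bind[OF ne NN_meas[OF x] B] NN_int by simp
  have "mixture M a K x = measure_of (space M) (sets M) (emeasure (NN \<bind> (\<lambda>i. K i x)))"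
    unfolding mixture_def
    by (rule measure_of_eq) (auto simp: sets.space_closed sets.sigma_sets_eq em)
  also have "\<dots> = NN \<bind> (\<lambda>i. K i x)"
    using measure_of_of_measure[of "NN \<bind> (\<lambda>i. K i x)"] sb spb by simp
  finally show ?thesis .
qed

lemma mix_sets: "x \<in> space M \<Longrightarrow> sets (mixture M a K x) = sets M"
  unfolding mixture_def by simp

lemma mix_em: "x \<in> space M \<Longrightarrow> B \<in> sets M \<Longrightarrow> emeasure (mixture M a K x) B = (\<Sum>i. ennreal (a i) * emeasure (K i x) B)"
  unfolding mix_bind using emeasure_bind[OF _ NN_meas] NN_int unfolding NN_def by simp

lemma mix_prob: "x \<in> space M \<Longrightarrow> prob_space (mixture M a K x)"
proof -
  assume x: "x \<in> space M"
  have sp: "space (mixture M a K x) = space M" using mix_sets[OF x] by (rule sets_eq_imp_space_eq)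
  have "emeasure (mixture M a K x) (space M) = (\<Sum>i. ennreal (a i) * emeasure (K i x) (space M))"
    using mix_em[OF x] by simp
  also have "\<dots> = (\<Sum>i. ennreal (a i))"
  proof -
    have "emeasure (K i x) (space M) = 1" for i
      using rkern.Kx[OF rk x] rkern.Kspace[OF rk x] prob_space.emeasure_space_1 by metis
    then show ?thesis by simp
  qed
  also have "\<dots> = 1" using suminf_ennreal_eq[OF a0 asum] by simp
  finally show ?thesis using sp by (intro prob_spaceI) simp
qed

lemma mix_kernel: "mixture M a K \<in> M \<rightarrow>\<^sub>M prob_algebra M"
proof (rule measurable_prob_algebraI)
  show "prob_space (mixture M a K x)" if "x \<in> space M" for x using mix_prob[OF that] .
  show "mixture M a K \<in> M \<rightarrow>\<^sub>M subprob_algebra M"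
  proof (rule measurable_subprob_algebra)
    show "subprob_space (mixture M a K x)" if "x \<in> space M" for x
      using mix_prob[OF that] by (rule prob_space_imp_subprob_space)
    show "sets (mixture M a K x) = sets M" if "x \<in> space M" for x using mix_sets[OF that] .
    fix A assume A: "A \<in> sets M"
    have "(\<lambda>x. \<Sum>i. ennreal (a i) * emeasure (K i x) A) \<in> borel_measurable M"
      using rkern.Kem_meas[OF rk A] by measurable
    then show "(\<lambda>x. emeasure (mixture M a K x) A) \<in> borel_measurable M"
      by (rule measurable_cong[THEN iffD1, rotated]) (simp add: mix_em A)
  qed
qed

lemma mix_rev: "reversible M (mixture M a K)"
  unfolding reversible_def
proof (intro ballI)
  fix A B assume A: "A \<in> sets M" and B: "B \<in> sets M"
  have e: "(\<integral>\<^sup>+x. indicator A x * emeasure (mixture M a K x) B \<partial>M)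
      = (\<Sum>i. ennreal (a i) * (\<integral>\<^sup>+x. indicator A x * emeasure (K i x) B \<partial>M))" if A: "A \<in> sets M" and B: "B \<in> sets M" for A B
  proof -
    have "{x \<in> space M. x \<in> A} = A" using sets.sets_into_space[OF A] by auto
    then have pA: "Measurable.pred M (\<lambda>x. x \<in> A)" unfolding pred_def using A by simp
    have "(\<integral>\<^sup>+x. indicator A x * emeasure (mixture M a K x) B \<partial>M)
        = (\<integral>\<^sup>+x. (\<Sum>i. ennreal (a i) * (indicator A x * emeasure (K i x) B)) \<partial>M)"
    proof (intro nn_integral_cong)
      fix x assume x: "x \<in> space M"
      have "indicator A x * emeasure (mixture M a K x) B = indicator A x * (\<Sum>i. ennreal (a i) * emeasure (K i x) B)"
        by (simp add: mix_em[OF x B])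
      also have "\<dots> = (\<Sum>i. indicator A x * (ennreal (a i) * emeasure (K i x) B))"
        by (rule ennreal_suminf_cmult[symmetric])
      finally show "indicator A x * emeasure (mixture M a K x) B = (\<Sum>i. ennreal (a i) * (indicator A x * emeasure (K i x) B))"
        by (simp add: mult.left_commute)
    qed
    also have "\<dots> = (\<Sum>i. \<integral>\<^sup>+x. ennreal (a i) * (indicator A x * emeasure (K i x) B) \<partial>M)"
      using rkern.Kem_meas[OF rk B] pA by (intro nn_integral_suminf) measurable
    also have "\<dots> = (\<Sum>i. ennreal (a i) * (\<integral>\<^sup>+x. indicator A x * emeasure (K i x) B \<partial>M))"
      using rkern.Kem_meas[OF rk B] pA by (intro suminf_cong nn_integral_cmult) measurable
    finally show ?thesis .
  qed
  show "(\<integral>\<^sup>+x. indicator A x * emeasure (mixture M a K x) B \<partial>M) = (\<integral>\<^sup>+x. indicator B x * emeasure (mixture M a K x) A \<partial>M)"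
    unfolding e[OF A B] e[OF B A] using rev A B unfolding reversible_def by simp
qed

lemma rkmix: "rkern M (mixture M a K)"
  by (rule rkern.intro[OF prob_space_axioms]) (unfold_locales, auto intro: mix_kernel mix_rev)

lemma mix_nn:
  assumes x: "x \<in> space M" and v: "v \<in> borel_measurable M"
  shows "(\<integral>\<^sup>+y. v y \<partial>mixture M a K x) = (\<Sum>i. ennreal (a i) * (\<integral>\<^sup>+y. v y \<partial>K i x))"
  unfolding mix_bind[OF x] using nn_integral_bind[OF v NN_meas[OF x]] NN_int by simp

lemma Phi_mix:
  assumes u: "u \<in> borel_measurable M" and v: "v \<in> borel_measurable M"
  shows "rkern.Phi M (mixture M a K) u v = (\<Sum>i. ennreal (a i) * rkern.Phi M (K i) u v)"
proof -
  have "rkern.Phi M (mixture M a K) u v = (\<integral>\<^sup>+x. (\<Sum>i. ennreal (a i) * (u x * (\<integral>\<^sup>+y. v y \<partial>K i x))) \<partial>M)"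
    unfolding rkern.Phi_def[OF rkmix] by (intro nn_integral_cong) (simp add: mix_nn v ac_simps)
  also have "\<dots> = (\<Sum>i. \<integral>\<^sup>+x. ennreal (a i) * (u x * (\<integral>\<^sup>+y. v y \<partial>K i x)) \<partial>M)"
    using rkern.Kint_meas[OF rk v] u by (intro nn_integral_suminf) measurable
  also have "\<dots> = (\<Sum>i. ennreal (a i) * rkern.Phi M (K i) u v)"
    unfolding rkern.Phi_def[OF rk]
    using rkern.Kint_meas[OF rk v] u by (intro suminf_cong nn_integral_cmult) measurable
  finally show ?thesis .
qed

lemma J_mix:
  assumes p: "p \<in> L2 M" and q: "q \<in> L2 M" and p0: "\<And>y. 0 \<le> p y" and q0: "\<And>y. 0 \<le> q y"
  shows "(\<lambda>i. a i * ip M (kop (K i) p) q) sums ip M (kop (mixture M a K) p) q"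
proof -
  have pm: "p \<in> borel_measurable M" and qm: "q \<in> borel_measurable M" using p q unfolding L2_def by auto
  have J0: "0 \<le> ip M (kop L p) q" if "rkern M L" for L
    unfolding ip_def using rkern.kop_nonneg[OF that p0] q0 by (auto intro!: Bochner_Integration.integral_nonneg)
  have "ennreal (ip M (kop (mixture M a K) p) q) = rkern.Phi M (mixture M a K) (\<lambda>x. ennreal (q x)) (\<lambda>y. ennreal (p y))"
    using rkern.kop_J[OF rkmix p q p0 q0] by simp
  also have "\<dots> = (\<Sum>i. ennreal (a i) * rkern.Phi M (K i) (\<lambda>x. ennreal (q x)) (\<lambda>y. ennreal (p y)))"
    using pm qm by (intro Phi_mix) auto
  also have "\<dots> = (\<Sum>i. ennreal (a i * ip M (kop (K i) p) q))"
    using rkern.kop_J[OF rk p q p0 q0] a0 by (simp add: ennreal_mult')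
  finally have e: "(\<Sum>i. ennreal (a i * ip M (kop (K i) p) q)) = ennreal (ip M (kop (mixture M a K) p) q)" by simp
  have "(\<lambda>i. ennreal (a i * ip M (kop (K i) p) q)) sums ennreal (ip M (kop (mixture M a K) p) q)"
    unfolding e[symmetric] by (rule summable_sums[OF summableI])
  then show ?thesis using a0 J0[OF rk] J0[OF rkmix] by (subst (asm) sums_ennreal) auto
qed

lemma ip_mix:
  assumes f: "f \<in> L2 M"
  shows "(\<lambda>i. a i * ip M (kop (K i) f) f) sums ip M (kop (mixture M a K) f) f"
proof -
  note F = rkern.pp_nn[OF rk f]
  have s: "(\<lambda>i. a i * ip M (kop (K i) (pp f)) (pp f) - a i * ip M (kop (K i) (pp f)) (nn f)
      - a i * ip M (kop (K i) (nn f)) (pp f) + a i * ip M (kop (K i) (nn f)) (nn f))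
    sums (ip M (kop (mixture M a K) (pp f)) (pp f) - ip M (kop (mixture M a K) (pp f)) (nn f)
      - ip M (kop (mixture M a K) (nn f)) (pp f) + ip M (kop (mixture M a K) (nn f)) (nn f))"
    by (intro sums_add sums_diff J_mix F(1-4))
  have "a i * ip M (kop (K i) f) f = a i * ip M (kop (K i) (pp f)) (pp f) - a i * ip M (kop (K i) (pp f)) (nn f)
      - a i * ip M (kop (K i) (nn f)) (pp f) + a i * ip M (kop (K i) (nn f)) (nn f)" for i
    by (subst rkern.kop_expand[OF rk f f]) (simp add: algebra_simps)
  moreover have "ip M (kop (mixture M a K) f) f = ip M (kop (mixture M a K) (pp f)) (pp f) - ip M (kop (mixture M a K) (pp f)) (nn f)
      - ip M (kop (mixture M a K) (nn f)) (pp f) + ip M (kop (mixture M a K) (nn f)) (nn f)"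
    by (rule rkern.kop_expand[OF rkmix f f])
  ultimately show ?thesis using s by simp
qed

end

context prob_space
begin

lemma Q_scale:
  assumes B: "lin0 M B" and f: "f \<in> L2_0 M"
  shows "ip M (B (\<lambda>x. c * f x)) (\<lambda>x. c * f x) = c\<^sup>2 * ip M (B f) f"
proof -
  have cf: "(\<lambda>x. c * f x) \<in> L2_0 M" by (rule L2_0_scale[OF f])
  have "ip M (B (\<lambda>x. c * f x)) (\<lambda>x. c * f x) = ip M (\<lambda>x. c * B f x) (\<lambda>x. c * f x)"
    using lin0_scale[OF B f, of c] lin0_in[OF B cf] L2_0_scale[OF lin0_in[OF B f], of c] cf
    by (intro ip_cong_meas) (auto simp: L2_0_meas)
  also have "\<dots> = c * ip M (B f) (\<lambda>x. c * f x)"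
    using ip_lin_left[OF L2_0_L2[OF lin0_in[OF B f]] L2_0_L2[OF lin0_in[OF B f]] L2_0_L2[OF cf], of c 0] by simp
  also have "ip M (B f) (\<lambda>x. c * f x) = c * ip M (B f) f"
    using ip_lin_right[OF L2_0_L2[OF f] L2_0_L2[OF f] L2_0_L2[OF lin0_in[OF B f]], of c 0] by simp
  finally show ?thesis by (simp add: power2_eq_square)
qed

lemma num_bound_from_bij:
  assumes B: "lin0 M B" "bnd M B C" "symop M B"
    and resolv: "\<And>l. l > r \<Longrightarrow> bij0 M (\<lambda>f x. B f x - l * f x)"
    and f: "f \<in> L2_0 M"
  shows "ip M (B f) f \<le> r * (nrm M f)\<^sup>2"
proof (rule ccontr)
  assume "\<not> ?thesis"
  then have f0: "ip M (B f) f > r * (nrm M f)\<^sup>2" by simp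
  have Bf: "\<bar>ip M (B g) g\<bar> \<le> \<bar>C\<bar> * (nrm M g)\<^sup>2" if g: "g \<in> L2_0 M" for g
  proof -
    have "\<bar>ip M (B g) g\<bar> \<le> nrm M (B g) * nrm M g" using lin0_in[OF B(1) g] g by (intro CS) (auto simp: L2_0_L2)
    also have "\<dots> \<le> (\<bar>C\<bar> * nrm M g) * nrm M g"
    proof (intro mult_right_mono)
      have "nrm M (B g) \<le> C * nrm M g" using B(2) g unfolding bnd_def by auto
      also have "\<dots> \<le> \<bar>C\<bar> * nrm M g" by (intro mult_right_mono) (auto simp: nrm_nonneg)
      finally show "nrm M (B g) \<le> \<bar>C\<bar> * nrm M g" .
    qed (simp add: nrm_nonneg)
    finally show ?thesis by (simp add: power2_eq_square)
  qed
  have nf: "nrm M f > 0"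
  proof (rule ccontr)
    assume "\<not> nrm M f > 0"
    then have "nrm M f = 0" using nrm_nonneg[of M f] by simp
    then show False using Bf[OF f] f0 by simp
  qed
  define U where "U = {ip M (B g) g | g. g \<in> L2_0 M \<and> nrm M g = 1}"
  define u0 where "u0 = (\<lambda>x. (1 / nrm M f) * f x)"
  have u01: "u0 \<in> L2_0 M" unfolding u0_def by (rule L2_0_scale[OF f])
  have u02: "nrm M u0 = 1" unfolding u0_def nrm_scale[OF L2_0_L2[OF f]] using nf by simp
  note u0 = u01 u02
  have ipu0: "ip M (B u0) u0 = ip M (B f) f / (nrm M f)\<^sup>2"
    unfolding u0_def Q_scale[OF B(1) f] by (simp add: power_divide)
  have Une: "U \<noteq> {}" unfolding U_def using u0 by blast
  have Ubd: "bdd_above U" unfolding U_def bdd_above_def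
  proof (intro exI[of _ "\<bar>C\<bar>"] allI impI ballI)
    fix y assume "y \<in> {ip M (B g) g | g. g \<in> L2_0 M \<and> nrm M g = 1}"
    then obtain g where g: "g \<in> L2_0 M" "nrm M g = 1" "y = ip M (B g) g" by blast
    then show "y \<le> \<bar>C\<bar>" using Bf[OF g(1)] by simp
  qed
  define Ms where "Ms = Sup U"
  have up: "ip M (B g) g \<le> Ms" if "g \<in> L2_0 M" "nrm M g = 1" for g
    unfolding Ms_def using that Ubd by (intro cSup_upper) (auto simp: U_def)
  have "r < ip M (B u0) u0" unfolding ipu0 using f0 nf by (simp add: field_simps)
  then have rMs: "r < Ms" using up[OF u0] by simp
  define D where "D = (\<lambda>f x. B f x - Ms * f x)"
  have Dl: "lin0 M D" unfolding D_def by (rule lin0_shift[OF B(1)])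
  have Db: "bnd M D (C + \<bar>Ms\<bar>)" unfolding D_def by (rule bnd_shift[OF B(1,2)])
  have Ds: "symop M D" unfolding D_def by (rule symop_shift[OF B(1,3)])
  have ipD: "ip M (D g) g = ip M (B g) g - Ms * (nrm M g)\<^sup>2" if g: "g \<in> L2_0 M" for g
    unfolding D_def using ip_lin_left[OF L2_0_L2[OF lin0_in[OF B(1) g]] L2_0_L2[OF g] L2_0_L2[OF g], of 1 "-Ms"]
    by (simp add: nrm_sq)
  have neg: "ip M (D g) g \<le> 0" if g: "g \<in> L2_0 M" for g
  proof (cases "nrm M g = 0")
    case True
    then show ?thesis using ipD[OF g] Bf[OF g] by simp
  next
    case False
    then have ng: "nrm M g > 0" using nrm_nonneg[of M g] by simp
    define v where "v = (\<lambda>x. (1 / nrm M g) * g x)"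
    have v1: "v \<in> L2_0 M" unfolding v_def by (rule L2_0_scale[OF g])
    have v2: "nrm M v = 1" unfolding v_def nrm_scale[OF L2_0_L2[OF g]] using ng by simp
    note v = v1 v2
    have "ip M (B v) v = ip M (B g) g / (nrm M g)\<^sup>2"
      unfolding v_def Q_scale[OF B(1) g] by (simp add: power_divide)
    then have "ip M (B g) g / (nrm M g)\<^sup>2 \<le> Ms" using up[OF v] by simp
    then have "ip M (B g) g \<le> Ms * (nrm M g)\<^sup>2" using ng by (simp add: divide_le_eq)
    then show ?thesis using ipD[OF g] by simp
  qed
  have approx: "\<exists>g\<in>L2_0 M. nrm M g = 1 \<and> - e \<le> ip M (D g) g" if e: "e > 0" for e
  proof -
    have "Ms - e < Sup U" using e unfolding Ms_def by simp
    then obtain y where "y \<in> U" "Ms - e < y" using less_cSupD[OF Une] by blast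
    then obtain g where g: "g \<in> L2_0 M" "nrm M g = 1" "Ms - e < ip M (B g) g" unfolding U_def by blast
    then show ?thesis using ipD[OF g(1)] by (intro bexI[of _ g]) auto
  qed
  have "\<not> bij0 M D" by (rule spec_top[OF Dl Db Ds neg approx])
  moreover have "bij0 M D" unfolding D_def using resolv[OF rMs] .
  ultimately show False by simp
qed

end

context mixset
begin

lemma si_abs:
  assumes f: "f \<in> L2 M"
  shows "\<bar>ip M (kop (K i) f) f\<bar> \<le> (nrm M f)\<^sup>2"
proof -
  have "\<bar>ip M (kop (K i) f) f\<bar> \<le> nrm M (kop (K i) f) * nrm M f"
    using rkern.kop_L2(1)[OF rk f] f by (intro CS)
  also have "\<dots> \<le> nrm M f * nrm M f"
    using rkern.kop_L2(2)[OF rk f] by (intro mult_right_mono) (auto simp: nrm_nonneg)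
  finally show ?thesis by (simp add: power2_eq_square)
qed

lemma mix_upper:
  assumes f: "f \<in> L2 M" and up0: "ip M (kop (K 0) f) f \<le> r * (nrm M f)\<^sup>2"
  shows "ip M (kop (mixture M a K) f) f \<le> (1 - a 0 * (1 - r)) * (nrm M f)\<^sup>2"
proof -
  define n2 where "n2 = (nrm M f)\<^sup>2"
  have s1: "(\<lambda>i. a i * n2) sums (1 * n2)" by (rule sums_mult2[OF asum])
  have s2: "(\<lambda>i. if i = 0 then a 0 * (1 - r) * n2 else 0) sums (a 0 * (1 - r) * n2)"
    using sums_single[of 0 "\<lambda>_. a 0 * (1 - r) * n2"] by simp
  have g: "(\<lambda>i. a i * n2 - (if i = 0 then a 0 * (1 - r) * n2 else 0)) sums (1 * n2 - a 0 * (1 - r) * n2)"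
    by (rule sums_diff[OF s1 s2])
  have le:  "a i * ip M (kop (K i) f) f \<le> a i * n2 - (if i = 0 then a 0 * (1 - r) * n2 else 0)" for i
  proof (cases "i = 0")
    case True
    have "a 0 * ip M (kop (K 0) f) f \<le> a 0 * (r * n2)" using up0 a0[of 0] unfolding n2_def by (intro mult_left_mono)
    then show ?thesis using True by (simp add: algebra_simps)
  next
    case False
    have "a i * ip M (kop (K i) f) f \<le> a i * n2" using si_abs[OF f, of i] a0[of i] unfolding n2_def
      by (intro mult_left_mono) auto
    then show ?thesis using False by simp
  qed
  have "ip M (kop (mixture M a K) f) f \<le> 1 * n2 - a 0 * (1 - r) * n2"
    by (rule sums_le[OF le ip_mix[OF f] g])
  then show ?thesis unfolding n2_def by (simp add: algebra_simps)
qed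

lemma mix_lower:
  assumes f: "f \<in> L2 M" and lo0: "- r * (nrm M f)\<^sup>2 \<le> ip M (kop (K 0) f) f"
  shows "- (1 - a 0 * (1 - r)) * (nrm M f)\<^sup>2 \<le> ip M (kop (mixture M a K) f) f"
proof -
  define n2 where "n2 = (nrm M f)\<^sup>2"
  have s1: "(\<lambda>i. a i * n2) sums (1 * n2)" by (rule sums_mult2[OF asum])
  have s2: "(\<lambda>i. if i = 0 then a 0 * (1 - r) * n2 else 0) sums (a 0 * (1 - r) * n2)"
    using sums_single[of 0 "\<lambda>_. a 0 * (1 - r) * n2"] by simp
  have g: "(\<lambda>i. - (a i * n2 - (if i = 0 then a 0 * (1 - r) * n2 else 0))) sums (- (1 * n2 - a 0 * (1 - r) * n2))"
    by (rule sums_minus[OF sums_diff[OF s1 s2]])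
  have le:  "- (a i * n2 - (if i = 0 then a 0 * (1 - r) * n2 else 0)) \<le> a i * ip M (kop (K i) f) f" for i
  proof (cases "i = 0")
    case True
    have "a 0 * (- r * n2) \<le> a 0 * ip M (kop (K 0) f) f" using lo0 a0[of 0] unfolding n2_def by (intro mult_left_mono)
    then show ?thesis using True by (simp add: algebra_simps)
  next
    case False
    have "a i * (- n2) \<le> a i * ip M (kop (K i) f) f" using si_abs[OF f, of i] a0[of i] unfolding n2_def
      by (intro mult_left_mono) auto
    then show ?thesis using False by simp
  qed
  have "- (1 * n2 - a 0 * (1 - r) * n2) \<le> ip M (kop (mixture M a K) f) f"
    by (rule sums_le[OF le g ip_mix[OF f]])
  then show ?thesis unfolding n2_def by (simp add: algebra_simps)
qed

lemma a0_le1: "a 0 \<le> 1"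
proof -
  have "sum a {0} \<le> suminf a" using sums_summable[OF asum] a0 by (intro sum_le_suminf) auto
  then show ?thesis using sums_unique[OF asum] by simp
qed

end

lemma (in prob_space) bnd_neg: "bnd M B C \<Longrightarrow> lin0 M B \<Longrightarrow> bnd M (\<lambda>f x. - B f x) C"
  unfolding bnd_def using nrm_neg lin0_in by (metis L2_0_L2)

lemma (in prob_space) ip_neg_left: "f \<in> L2 M \<Longrightarrow> g \<in> L2 M \<Longrightarrow> ip M (\<lambda>x. - f x) g = - ip M f g"
  using ip_lin_left[of f M f g "-1" 0] by simp

lemma (in prob_space) ip_shift_left:
  "f \<in> L2 M \<Longrightarrow> g \<in> L2 M \<Longrightarrow> ip M (\<lambda>x. f x - c * g x) g = ip M f g - c * (nrm M g)\<^sup>2"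
  using ip_lin_left[of f M g g 1 "-c"] by (simp add: nrm_sq)

lemma arith1: "(I::real) \<le> A \<Longrightarrow> - N \<le> I \<Longrightarrow> I - (A - N) / 2 \<le> (A + N) / 2 \<and> - (I - (A - N) / 2) \<le> (A + N) / 2"
  by (auto simp: field_simps)

theorem theorem5:
  fixes \<pi> :: "'a measure" and K :: "nat \<Rightarrow> 'a \<Rightarrow> 'a measure" and a :: "nat \<Rightarrow> real"
  assumes "prob_space \<pi>"
    and "\<And>i. markov_kernel \<pi> (K i)"
    and "\<And>i. reversible \<pi> (K i)"
    and "\<And>i. a i \<ge> 0"
    and "a sums 1"
    and "a 0 > 0"
    and "unique_invariant \<pi> (K 0)"
  shows "(variance_bounding \<pi> (K 0) \<longrightarrow> variance_bounding \<pi> (mixture \<pi> a K)) \<and>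
         (geometrically_ergodic \<pi> (K 0) \<longrightarrow> geometrically_ergodic \<pi> (mixture \<pi> a K))"
proof -
  interpret P: prob_space \<pi> by (rule assms(1))
  have mx: "mixset \<pi> K a"
    using assms by (intro mixset.intro mixset_axioms.intro) (auto simp: markov_kernel_def)
  interpret mixset \<pi> K a by (rule mx)
  have apos: "a 0 > 0" by (rule assms(6))
  have a1: "a 0 \<le> 1" by (rule a0_le1)
  note rk0 = rk[of 0]
  note B0l = rkern.kop_lin0[OF rk0] and B0b = rkern.kop_bnd[OF rk0] and B0s = rkern.kop_symop[OF rk0]
  note Bml = rkern.kop_lin0[OF rkmix] and Bmb = rkern.kop_bnd[OF rkmix] and Bms = rkern.kop_symop[OF rkmix]
  define Km where "Km = mixture \<pi> a K"
  show ?thesis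
  proof (intro conjI impI)
    assume "variance_bounding \<pi> (K 0)"
    then obtain r where r: "r < 1" "\<And>l. l \<in> spectrum0 \<pi> (K 0) \<Longrightarrow> l \<le> r"
      unfolding variance_bounding_def by blast
    define r1 where "r1 = max r (-1)"
    have r1: "r1 < 1" "-1 \<le> r1" "\<And>l. l \<in> spectrum0 \<pi> (K 0) \<Longrightarrow> l \<le> r1"
      unfolding r1_def using r by (auto simp: le_max_iff_disj)
    have resolv: "bij0 \<pi> (\<lambda>f x. kop (K 0) f x - l * f x)" if "l > r1" for l
      using r1(3)[of l] that spectrum0_iff[of l \<pi> "K 0"] by auto
    have up0: "ip \<pi> (kop (K 0) f) f \<le> r1 * (nrm \<pi> f)\<^sup>2" if "f \<in> L2_0 \<pi>" for f
      by (rule P.num_bound_from_bij[OF B0l B0b B0s resolv that])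
    define m where "m = 1 - a 0 * (1 - r1)"
    have m1: "m < 1" unfolding m_def using apos r1 by simp
    have mlow: "-1 \<le> m"
    proof -
      have "a 0 * (1 - r1) \<le> 1 * 2" using a1 r1 apos by (intro mult_mono) auto
      then show ?thesis unfolding m_def by simp
    qed
    define c where "c = (m - 1) / 2"
    define \<rho> where "\<rho> = (m + 1) / 2"
    have rho0: "0 \<le> \<rho>" unfolding \<rho>_def using mlow by simp
    define E where "E = (\<lambda>f x. kop Km f x - c * f x)"
    have El: "lin0 \<pi> E" unfolding E_def Km_def by (rule P.lin0_shift[OF Bml])
    have Eb: "bnd \<pi> E (1 + \<bar>c\<bar>)" unfolding E_def Km_def by (rule P.bnd_shift[OF Bml Bmb])
    have Es: "symop \<pi> E" unfolding E_def Km_def by (rule P.symop_shift[OF Bml Bms])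
    have Enum: "\<bar>ip \<pi> (E f) f\<bar> \<le> \<rho> * (nrm \<pi> f)\<^sup>2" if f: "f \<in> L2_0 \<pi>" for f
    proof -
      have fL: "f \<in> L2 \<pi>" using f by (rule L2_0_L2)
      have kL: "kop Km f \<in> L2 \<pi>" using rkern.kop_L2(1)[OF rkmix fL] unfolding Km_def .
      have e: "ip \<pi> (E f) f = ip \<pi> (kop Km f) f - c * (nrm \<pi> f)\<^sup>2"
        unfolding E_def by (rule P.ip_shift_left[OF kL fL])
      have u: "ip \<pi> (kop Km f) f \<le> m * (nrm \<pi> f)\<^sup>2" unfolding Km_def m_def by (rule mix_upper[OF fL up0[OF f]])
      have l: "- (1 - a 0 * (1 - 1)) * (nrm \<pi> f)\<^sup>2 \<le> ip \<pi> (kop Km f) f"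
        unfolding Km_def by (rule mix_lower[OF fL]) (use si_abs[OF fL, of 0] in simp)
      have c2: "c * (nrm \<pi> f)\<^sup>2 = (m * (nrm \<pi> f)\<^sup>2 - (nrm \<pi> f)\<^sup>2) / 2" unfolding c_def by (simp add: field_simps)
      have r2: "\<rho> * (nrm \<pi> f)\<^sup>2 = (m * (nrm \<pi> f)\<^sup>2 + (nrm \<pi> f)\<^sup>2) / 2" unfolding \<rho>_def by (simp add: field_simps)
      have l': "- (nrm \<pi> f)\<^sup>2 \<le> ip \<pi> (kop Km f) f" using l by simp
      show ?thesis unfolding abs_le_iff r2 e c2 by (rule arith1[OF u l'])
    qed
    have Eb2: "bnd \<pi> E \<rho>" by (rule P.numrad[OF El Eb Es Enum])
    have "l \<le> m" if l: "l \<in> spectrum0 \<pi> Km" for l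
    proof (rule ccontr)
      assume "\<not> l \<le> m"
      then have lm: "l > m" by simp
      have "bij0 \<pi> (\<lambda>f x. E f x - (l - c) * f x)"
      proof (rule P.neumann[OF El Eb2 rho0])
        have "\<rho> < l - c" unfolding \<rho>_def c_def using lm by (simp add: field_simps)
        then show "\<rho> < \<bar>l - c\<bar>" by simp
      qed
      moreover have "(\<lambda>f x. E f x - (l - c) * f x) = (\<lambda>f x. kop Km f x - l * f x)"
        unfolding E_def by (simp add: fun_eq_iff algebra_simps)
      ultimately show False using l spectrum0_iff[of l \<pi> Km] by simp
    qed
    then show "variance_bounding \<pi> (mixture \<pi> a K)"
      unfolding variance_bounding_def Km_def[symmetric] using m1 by blast
  next
    assume "geometrically_ergodic \<pi> (K 0)"
    then obtain r where r: "r < 1" "\<And>l. l \<in> spectrum0 \<pi> (K 0) \<Longrightarrow> \<bar>l\<bar> \<le> r"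
      unfolding geometrically_ergodic_def by blast
    define r1 where "r1 = max r 0"
    have r1: "r1 < 1" "0 \<le> r1" "\<And>l. l \<in> spectrum0 \<pi> (K 0) \<Longrightarrow> \<bar>l\<bar> \<le> r1"
      unfolding r1_def using r by (auto simp: le_max_iff_disj)
    have resolv: "bij0 \<pi> (\<lambda>f x. kop (K 0) f x - l * f x)" if "\<bar>l\<bar> > r1" for l
      using r1(3)[of l] that spectrum0_iff[of l \<pi> "K 0"] by auto
    have up0: "ip \<pi> (kop (K 0) f) f \<le> r1 * (nrm \<pi> f)\<^sup>2" if "f \<in> L2_0 \<pi>" for f
      by (rule P.num_bound_from_bij[OF B0l B0b B0s _ that]) (rule resolv, use r1 in simp)
    have lo0: "- r1 * (nrm \<pi> f)\<^sup>2 \<le> ip \<pi> (kop (K 0) f) f" if f: "f \<in> L2_0 \<pi>" for f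
    proof -
      have nl: "lin0 \<pi> (\<lambda>f x. - kop (K 0) f x)" by (rule P.lin0_neg[OF B0l])
      have nb: "bnd \<pi> (\<lambda>f x. - kop (K 0) f x) 1" by (rule P.bnd_neg[OF B0b B0l])
      have ns: "symop \<pi> (\<lambda>f x. - kop (K 0) f x)" by (rule P.symop_neg[OF B0l B0s])
      have nr: "bij0 \<pi> (\<lambda>f x. - kop (K 0) f x - l * f x)" if "l > r1" for l
      proof -
        have "bij0 \<pi> (\<lambda>f x. - (kop (K 0) f x - (- l) * f x))"
          using that r1 by (intro P.bij0_neg resolv) simp
        moreover have "(\<lambda>f x. - (kop (K 0) f x - (- l) * f x)) = (\<lambda>f x. - kop (K 0) f x - l * f x)"
          by (simp add: fun_eq_iff)
        ultimately show ?thesis by simp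
      qed
      have "ip \<pi> (\<lambda>x. - kop (K 0) f x) f \<le> r1 * (nrm \<pi> f)\<^sup>2"
        by (rule P.num_bound_from_bij[OF nl nb ns nr f])
      moreover have "ip \<pi> (\<lambda>x. - kop (K 0) f x) f = - ip \<pi> (kop (K 0) f) f"
        using rkern.kop_L2(1)[OF rk0 L2_0_L2[OF f]] L2_0_L2[OF f] by (rule P.ip_neg_left)
      ultimately show ?thesis by simp
    qed
    define m where "m = 1 - a 0 * (1 - r1)"
    have m1: "m < 1" unfolding m_def using apos r1 by simp
    have m0: "0 \<le> m"
    proof -
      have "a 0 * (1 - r1) \<le> 1 * 1" using a1 r1 apos by (intro mult_mono) auto
      then show ?thesis unfolding m_def by simp
    qed
    have Mnum: "\<bar>ip \<pi> (kop Km f) f\<bar> \<le> m * (nrm \<pi> f)\<^sup>2" if f: "f \<in> L2_0 \<pi>" for f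
    proof -
      have fL: "f \<in> L2 \<pi>" using f by (rule L2_0_L2)
      have u: "ip \<pi> (kop Km f) f \<le> m * (nrm \<pi> f)\<^sup>2" unfolding Km_def m_def by (rule mix_upper[OF fL up0[OF f]])
      have l: "- m * (nrm \<pi> f)\<^sup>2 \<le> ip \<pi> (kop Km f) f" unfolding Km_def m_def by (rule mix_lower[OF fL lo0[OF f]])
      show ?thesis using u l by (simp add: abs_le_iff)
    qed
    have Mb: "bnd \<pi> (kop Km) m" unfolding Km_def by (rule P.numrad[OF Bml Bmb Bms Mnum[unfolded Km_def]])
    have "\<bar>l\<bar> \<le> m" if l: "l \<in> spectrum0 \<pi> Km" for l
    proof (rule ccontr)
      assume "\<not> \<bar>l\<bar> \<le> m"
      then have "bij0 \<pi> (\<lambda>f x. kop Km f x - l * f x)"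
        using m0 by (intro P.neumann[OF _ Mb]) (auto simp: Km_def intro: Bml)
      then show False using l spectrum0_iff[of l \<pi> Km] by simp
    qed
    then show "geometrically_ergodic \<pi> (mixture \<pi> a K)"
      unfolding geometrically_ergodic_def Km_def[symmetric] using m1 by blast
  qed
qed

end
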